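(* Let $D$ be an integral domain with quotient field $K$ and $\mathcal S$ a multiplicative subset of $D[X]$ ($0\notin\mathcal S$), and let $\circlearrowleft_{\mathcal S}$ be the semistar operation $E\mapsto ED[X]_{\mathcal S}\cap K$ on $D$. Then: (f) $\circlearrowleft_{\mathcal S}$ is a (semi)star operation on $D$ (i.e. $D^{\circlearrowleft_{\mathcal S}}=D$) if and only if $\mathcal S\subseteq\mathcal N^{v_D}$, if and only if $D=\bigcap\{D_P\mid P\in\boldsymbol\nabla(\mathcal S)\}$; (g) the map $\mathcal S\mapsto\circlearrowleft_{\mathcal S}$ is a bijection between the set of extended saturated multiplicative subsets of $D[X]$ and the set of stable semistar operations of finite type on $D$; it restricts to a bijection between the extended saturated multiplicative subsets of $D[X]$ contained in $\mathcal N^{v_D}$ and the stable (semi)star operations of finite type on $D$; (h) if $\mathcal S$ is extended saturated, then $\mathrm{Na}(D,v_D)=D[X]_{\mathcal S}$ if and only if $\mathcal S=\mathcal N^{v_D}$.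
   Context: $\overline{\boldsymbol F}(D)$ is the set of nonzero $D$-submodules of $K$. A semistar operation on $D$ is a map $\star:\overline{\boldsymbol F}(D)\to\overline{\boldsymbol F}(D)$ with $(xE)^\star=xE^\star$ for $0\ne x\in K$, $E\subseteq F\Rightarrow E^\star\subseteq F^\star$, $E\subseteq E^\star$ and $(E^\star)^\star=E^\star$; it is a (semi)star operation if $D^\star=D$. $\star$ is of finite type if $E^\star=\bigcup\{F^\star\mid F\subseteq E,\ F$ a nonzero finitely generated fractional ideal$\}$ for all $E$, and stable if $(E\cap F)^\star=E^\star\cap F^\star$. $v_D$ is the operation $E^{v}=(D:(D:E))$. For $f\in K[X]$, $\mathrm{c}_D(f)$ is the fractional ideal generated by its coefficients; $\mathcal N^\star=\{g\in D[X]\mid g\ne0,\ \mathrm{c}_D(g)^\star=D^\star\}$ and $\mathrm{Na}(D,\star)=D[X]_{\mathcal N^\star}$. For a multiplicative set $\mathcal S\subseteq D[X]$: its extended saturation is $\mathcal S^\sharp=D[X]\setminus\bigcup\{P[X]\mid P\in\mathrm{Spec}(D),\ P[X]\cap\mathcal S=\emptyset\}$; $\mathcal S$ is extended saturated if $\mathcal S=\mathcal S^\sharp$; $\boldsymbol\Delta(\mathcal S)=\{P\in\mathrm{Spec}(D)\mid P[X]\cap\mathcal S=\emptyset\}$ and $\boldsymbol\nabla(\mathcal S)$ is the set of maximal elements of $\boldsymbol\Delta(\mathcal S)$. *)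

theory Defs
  imports "HOL-Computational_Algebra.Polynomial" "HOL-Computational_Algebra.Fraction_Field"
          "HOL-Library.FuncSet"
begin

(* Conventions: K is the ambient field (a type of class field); D :: 'a set is a subring of K
   whose quotient field is K.  K(X) is modelled as 'a poly fract. *)

definition is_domain_with_qf :: "'a::field set \<Rightarrow> bool" where
  "is_domain_with_qf D \<longleftrightarrow> 0 \<in> D \<and> 1 \<in> D \<and>
     (\<forall>a\<in>D. \<forall>b\<in>D. a + b \<in> D \<and> a - b \<in> D \<and> a * b \<in> D) \<and>
     (\<forall>x. \<exists>a\<in>D. \<exists>b\<in>D. b \<noteq> 0 \<and> x = a / b)"

definition is_submodule :: "'a::field set \<Rightarrow> 'a set \<Rightarrow> bool" where
  "is_submodule D E \<longleftrightarrow> 0 \<in> E \<and> (\<forall>x\<in>E. \<forall>y\<in>E. x + y \<in> E) \<and> (\<forall>d\<in>D. \<forall>x\<in>E. d * x \<in> E)"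

definition Fbar :: "'a::field set \<Rightarrow> 'a set set" where
  "Fbar D = {E. is_submodule D E \<and> E \<noteq> {0}}"

definition gen_mod :: "'a::field set \<Rightarrow> 'a set \<Rightarrow> 'a set" where
  "gen_mod D A = {\<Sum>x\<in>B. c x * x | B c. finite B \<and> B \<subseteq> A \<and> (\<forall>x\<in>B. c x \<in> D)}"

definition fg_frac_ideals :: "'a::field set \<Rightarrow> 'a set set" where
  "fg_frac_ideals D = {gen_mod D A | A. finite A \<and> gen_mod D A \<noteq> {0}}"

definition semistar :: "'a::field set \<Rightarrow> ('a set \<Rightarrow> 'a set) \<Rightarrow> bool" where
  "semistar D st \<longleftrightarrow>
     (\<forall>E\<in>Fbar D. st E \<in> Fbar D) \<and>
     (\<forall>x. \<forall>E\<in>Fbar D. x \<noteq> 0 \<longrightarrow> st ((\<lambda>e. x * e) ` E) = (\<lambda>e. x * e) ` st E) \<and>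
     (\<forall>E\<in>Fbar D. \<forall>F\<in>Fbar D. E \<subseteq> F \<longrightarrow> st E \<subseteq> st F) \<and>
     (\<forall>E\<in>Fbar D. E \<subseteq> st E) \<and>
     (\<forall>E\<in>Fbar D. st (st E) = st E)"

definition semistar_finite_type :: "'a::field set \<Rightarrow> ('a set \<Rightarrow> 'a set) \<Rightarrow> bool" where
  "semistar_finite_type D st \<longleftrightarrow>
     (\<forall>E\<in>Fbar D. st E = \<Union>{st F | F. F \<in> fg_frac_ideals D \<and> F \<subseteq> E})"

definition semistar_stable :: "'a::field set \<Rightarrow> ('a set \<Rightarrow> 'a set) \<Rightarrow> bool" where
  "semistar_stable D st \<longleftrightarrow> (\<forall>E\<in>Fbar D. \<forall>F\<in>Fbar D. st (E \<inter> F) = st E \<inter> st F)"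

definition colon :: "'a::field set \<Rightarrow> 'a set \<Rightarrow> 'a set" where
  "colon D E = {x. \<forall>e\<in>E. x * e \<in> D}"

definition v_op :: "'a::field set \<Rightarrow> 'a set \<Rightarrow> 'a set" where
  "v_op D E = colon D (colon D E)"

definition DX :: "'a::field set \<Rightarrow> 'a poly set" where
  "DX D = {f. \<forall>i. coeff f i \<in> D}"

definition content_D :: "'a::field set \<Rightarrow> 'a poly \<Rightarrow> 'a set" where
  "content_D D f = gen_mod D (range (coeff f))"

definition Nstar :: "'a::field set \<Rightarrow> ('a set \<Rightarrow> 'a set) \<Rightarrow> 'a poly set" where
  "Nstar D st = {g \<in> DX D. g \<noteq> 0 \<and> st (content_D D g) = st D}"

definition mult_subset :: "'a::field set \<Rightarrow> 'a poly set \<Rightarrow> bool" where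
  "mult_subset D S \<longleftrightarrow> S \<subseteq> DX D \<and> 1 \<in> S \<and> 0 \<notin> S \<and> (\<forall>f\<in>S. \<forall>g\<in>S. f * g \<in> S)"

definition locX :: "'a::field set \<Rightarrow> 'a poly set \<Rightarrow> 'a poly fract set" where
  "locX D S = {Fract f g | f g. f \<in> DX D \<and> g \<in> S}"

definition Na :: "'a::field set \<Rightarrow> ('a set \<Rightarrow> 'a set) \<Rightarrow> 'a poly fract set" where
  "Na D st = locX D (Nstar D st)"

definition embK :: "'a::field \<Rightarrow> 'a poly fract" where
  "embK c = Fract [:c:] 1"

definition mod_prod :: "'b::comm_ring_1 set \<Rightarrow> 'b set \<Rightarrow> 'b set" where
  "mod_prod A B = {\<Sum>i<(n::nat). a i * b i | n a b. \<forall>i<n. a i \<in> A \<and> b i \<in> B}"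

(* E \<mapsto> E D[X]_S \<inter> K *)
definition circ_op :: "'a::field set \<Rightarrow> 'a poly set \<Rightarrow> 'a set \<Rightarrow> 'a set" where
  "circ_op D S E = {c. embK c \<in> mod_prod (embK ` E) (locX D S)}"

definition Spec :: "'a::field set \<Rightarrow> 'a set set" where
  "Spec D = {P. P \<subseteq> D \<and> 0 \<in> P \<and> P \<noteq> D \<and> (\<forall>x\<in>P. \<forall>y\<in>P. x + y \<in> P) \<and>
                (\<forall>d\<in>D. \<forall>x\<in>P. d * x \<in> P) \<and>
                (\<forall>x\<in>D. \<forall>y\<in>D. x * y \<in> P \<longrightarrow> x \<in> P \<or> y \<in> P)}"

definition ext_ideal :: "'a::field set \<Rightarrow> 'a poly set" where
  "ext_ideal P = {f. \<forall>i. coeff f i \<in> P}"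

definition ext_sat :: "'a::field set \<Rightarrow> 'a poly set \<Rightarrow> 'a poly set" where
  "ext_sat D S = DX D - \<Union>{ext_ideal P | P. P \<in> Spec D \<and> ext_ideal P \<inter> S = {}}"

definition is_ext_saturated :: "'a::field set \<Rightarrow> 'a poly set \<Rightarrow> bool" where
  "is_ext_saturated D S \<longleftrightarrow> S = ext_sat D S"

definition Delta :: "'a::field set \<Rightarrow> 'a poly set \<Rightarrow> 'a set set" where
  "Delta D S = {P \<in> Spec D. ext_ideal P \<inter> S = {}}"

definition Nabla :: "'a::field set \<Rightarrow> 'a poly set \<Rightarrow> 'a set set" where
  "Nabla D S = {P \<in> Delta D S. \<forall>Q\<in>Delta D S. P \<subseteq> Q \<longrightarrow> Q = P}"

definition localize_at :: "'a::field set \<Rightarrow> 'a set \<Rightarrow> 'a set" where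
  "localize_at D P = {a / s | a s. a \<in> D \<and> s \<in> D - P}"

end

theory Submission
  imports Defs
begin

lemma dom_basic:
  assumes "is_domain_with_qf D"
  shows "0 \<in> D" "1 \<in> D" "\<And>a b. a \<in> D \<Longrightarrow> b \<in> D \<Longrightarrow> a + b \<in> D"
    "\<And>a b. a \<in> D \<Longrightarrow> b \<in> D \<Longrightarrow> a - b \<in> D"
    "\<And>a b. a \<in> D \<Longrightarrow> b \<in> D \<Longrightarrow> a * b \<in> D"
    "\<And>a. a \<in> D \<Longrightarrow> - a \<in> D"
    "\<And>x. \<exists>a\<in>D. \<exists>b\<in>D. b \<noteq> 0 \<and> x = a / b"
  using assms unfolding is_domain_with_qf_def
  by auto

lemma submod_D: "is_domain_with_qf D \<Longrightarrow> is_submodule D D"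
  using dom_basic[of D] unfolding is_submodule_def by auto

lemma submod_sum:
  assumes "is_submodule D E" "\<And>i. i \<in> A \<Longrightarrow> f i \<in> E"
  shows "sum f A \<in> E"
  using assms unfolding is_submodule_def
  by (induction A rule: infinite_finite_induct) auto

lemma submod_neg:
  assumes D: "is_domain_with_qf D" and E: "is_submodule D E" and x: "x \<in> E"
  shows "- x \<in> E"
proof -
  have "-1 \<in> D" using dom_basic[OF D] by auto
  hence "(-1) * x \<in> E" using E x unfolding is_submodule_def by blast
  thus ?thesis by simp
qed

lemma submod_diff:
  assumes D: "is_domain_with_qf D" and E: "is_submodule D E" and "x \<in> E" "y \<in> E"
  shows "x - y \<in> E"
  using submod_neg[OF D E \<open>y \<in> E\<close>] assms(3) E unfolding is_submodule_def
  by (metis diff_conv_add_uminus)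

lemma submod_Int: "is_submodule D E \<Longrightarrow> is_submodule D F \<Longrightarrow> is_submodule D (E \<inter> F)"
  unfolding is_submodule_def by auto

lemma submod_scale:
  assumes "is_submodule D E"
  shows "is_submodule D ((\<lambda>e. x * e) ` E)"
proof -
  have "x * a + x * b \<in> (\<lambda>e. x * e) ` E" if "a \<in> E" "b \<in> E" for a b
    using assms that unfolding is_submodule_def by (metis distrib_left image_eqI)
  moreover have "d * (x * a) \<in> (\<lambda>e. x * e) ` E" if "a \<in> E" "d \<in> D" for a d
    using assms that unfolding is_submodule_def by (metis mult.left_commute image_eqI)
  ultimately show ?thesis using assms unfolding is_submodule_def by (auto simp: image_iff)
qed

lemma submod_preimage:
  assumes "is_submodule D E"
  shows "is_submodule D {y. x * y \<in> E}"
  using assms unfolding is_submodule_def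
  by (auto simp: distrib_left) (metis mult.left_commute)

lemma gen_mod_I:
  assumes "finite B" "B \<subseteq> A" "\<forall>x\<in>B. c x \<in> D"
  shows "(\<Sum>x\<in>B. c x * x) \<in> gen_mod D A"
  unfolding gen_mod_def mem_Collect_eq using assms by blast

lemma gen_mod_submod:
  assumes D: "is_domain_with_qf D"
  shows "is_submodule D (gen_mod D A)"
proof -
  note dB = dom_basic[OF D]
  have z: "0 \<in> gen_mod D A" unfolding gen_mod_def mem_Collect_eq
    by (intro exI[of _ "{}"]) auto
  have add: "x + y \<in> gen_mod D A" if xx: "x \<in> gen_mod D A" and yy: "y \<in> gen_mod D A" for x y
  proof -
    obtain B1 c1 where 1: "x = (\<Sum>x\<in>B1. c1 x * x)" "finite B1" "B1 \<subseteq> A" "\<forall>x\<in>B1. c1 x \<in> D"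
      using xx unfolding gen_mod_def by blast
    obtain B2 c2 where 2: "y = (\<Sum>x\<in>B2. c2 x * x)" "finite B2" "B2 \<subseteq> A" "\<forall>x\<in>B2. c2 x \<in> D"
      using yy unfolding gen_mod_def by blast
    define d1 where "d1 x = (if x \<in> B1 then c1 x else 0)" for x
    define d2 where "d2 x = (if x \<in> B2 then c2 x else 0)" for x
    have "x = (\<Sum>z\<in>B1\<union>B2. d1 z * z)" unfolding 1(1)
      by (rule sum.mono_neutral_cong_left) (auto simp: 1 2 d1_def)
    moreover have "y = (\<Sum>z\<in>B1\<union>B2. d2 z * z)" unfolding 2(1)
      by (rule sum.mono_neutral_cong_left) (auto simp: 1 2 d2_def)
    ultimately have e: "x + y = (\<Sum>z\<in>B1\<union>B2. (d1 z + d2 z) * z)"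
      by (simp add: sum.distrib distrib_right)
    have "\<forall>z\<in>B1\<union>B2. d1 z + d2 z \<in> D" using 1 2 dB by (auto simp: d1_def d2_def)
    thus ?thesis unfolding e using 1 2 by (intro gen_mod_I) auto
  qed
  have sc: "d * x \<in> gen_mod D A" if dd: "d \<in> D" and xx: "x \<in> gen_mod D A" for d x
  proof -
    obtain B1 c1 where 1: "x = (\<Sum>x\<in>B1. c1 x * x)" "finite B1" "B1 \<subseteq> A" "\<forall>x\<in>B1. c1 x \<in> D"
      using xx unfolding gen_mod_def by blast
    have e: "d * x = (\<Sum>z\<in>B1. (d * c1 z) * z)" unfolding 1(1)
      by (simp add: sum_distrib_left mult.assoc)
    have "\<forall>z\<in>B1. d * c1 z \<in> D" using 1 dB dd by auto
    thus ?thesis unfolding e using 1 by (intro gen_mod_I) auto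
  qed
  show ?thesis unfolding is_submodule_def using z add sc by blast
qed

lemma gen_mod_gen:
  assumes D: "is_domain_with_qf D" and "a \<in> A"
  shows "a \<in> gen_mod D A"
proof -
  have "a = (\<Sum>z\<in>{a}. 1 * z)" by simp
  thus ?thesis unfolding gen_mod_def using assms dom_basic[OF D]
    by (intro CollectI exI[of _ "{a}"] exI[of _ "\<lambda>_. 1"]) auto
qed

lemma gen_mod_least:
  assumes E: "is_submodule D E" and "A \<subseteq> E"
  shows "gen_mod D A \<subseteq> E"
proof
  fix x assume "x \<in> gen_mod D A"
  then obtain B c where 1: "x = (\<Sum>x\<in>B. c x * x)" "finite B" "B \<subseteq> A" "\<forall>x\<in>B. c x \<in> D"
    unfolding gen_mod_def by blast
  show "x \<in> E" unfolding 1(1)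
    by (rule submod_sum[OF E]) (use 1 assms in \<open>auto simp: is_submodule_def\<close>)
qed

lemma gen_mod_subset_iff:
  assumes D: "is_domain_with_qf D" and E: "is_submodule D E"
  shows "gen_mod D A \<subseteq> E \<longleftrightarrow> A \<subseteq> E"
  using gen_mod_least[OF E] gen_mod_gen[OF D] by blast


lemma ext_idealI: "(\<And>i. coeff f i \<in> E) \<Longrightarrow> f \<in> ext_ideal E"
  unfolding ext_ideal_def by auto

lemma ext_idealD: "f \<in> ext_ideal E \<Longrightarrow> coeff f i \<in> E"
  unfolding ext_ideal_def by auto

lemma DX_ext: "DX D = ext_ideal D"
  unfolding DX_def ext_ideal_def by simp

lemma ext_mult:
  assumes E: "is_submodule D E" and f: "f \<in> ext_ideal E" and g: "g \<in> DX D"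
  shows "f * g \<in> ext_ideal E" "g * f \<in> ext_ideal E"
proof -
  have "coeff (f * g) n \<in> E" for n
    unfolding coeff_mult
  proof (rule submod_sum[OF E])
    fix i
    have "coeff g (n - i) * coeff f i \<in> E"
      using E f g unfolding is_submodule_def ext_ideal_def DX_def by blast
    thus "coeff f i * coeff g (n - i) \<in> E" by (simp add: mult.commute)
  qed
  thus "f * g \<in> ext_ideal E" "g * f \<in> ext_ideal E" by (auto intro: ext_idealI simp: mult.commute)
qed

lemma ext_add:
  assumes E: "is_submodule D E" and "f \<in> ext_ideal E" "g \<in> ext_ideal E"
  shows "f + g \<in> ext_ideal E"
  using assms unfolding is_submodule_def ext_ideal_def by auto

lemma ext_smult:
  assumes E: "is_submodule D E" and "f \<in> ext_ideal E" "d \<in> D"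
  shows "smult d f \<in> ext_ideal E"
  using assms unfolding is_submodule_def ext_ideal_def by auto

lemma ext_zero: "is_submodule D E \<Longrightarrow> 0 \<in> ext_ideal E"
  unfolding is_submodule_def ext_ideal_def by auto

lemma DX_mult: "is_domain_with_qf D \<Longrightarrow> f \<in> DX D \<Longrightarrow> g \<in> DX D \<Longrightarrow> f * g \<in> DX D"
  using ext_mult[OF submod_D] DX_ext by metis

lemma DX_one: "is_domain_with_qf D \<Longrightarrow> 1 \<in> DX D"
  using dom_basic[of D] unfolding DX_def by auto

lemma content_sub_iff:
  assumes D: "is_domain_with_qf D" and E: "is_submodule D E"
  shows "content_D D g \<subseteq> E \<longleftrightarrow> g \<in> ext_ideal E"
  unfolding content_D_def gen_mod_subset_iff[OF D E] ext_ideal_def by auto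

lemma content_scale_sub_iff:
  assumes D: "is_domain_with_qf D" and E: "is_submodule D E"
  shows "(\<lambda>e. x * e) ` content_D D g \<subseteq> E \<longleftrightarrow> smult x g \<in> ext_ideal E"
proof -
  have "(\<lambda>e. x * e) ` content_D D g \<subseteq> E \<longleftrightarrow> content_D D g \<subseteq> {y. x * y \<in> E}" by auto
  also have "\<dots> \<longleftrightarrow> g \<in> ext_ideal {y. x * y \<in> E}"
    by (rule content_sub_iff[OF D submod_preimage[OF E]])
  also have "\<dots> \<longleftrightarrow> smult x g \<in> ext_ideal E" unfolding ext_ideal_def by simp
  finally show ?thesis .
qed

lemma content_submod: "is_domain_with_qf D \<Longrightarrow> is_submodule D (content_D D g)"
  unfolding content_D_def by (rule gen_mod_submod)

lemma coeff_in_content: "is_domain_with_qf D \<Longrightarrow> coeff g i \<in> content_D D g"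
  unfolding content_D_def by (rule gen_mod_gen) auto

lemma content_sub_D: "is_domain_with_qf D \<Longrightarrow> g \<in> DX D \<Longrightarrow> content_D D g \<subseteq> D"
  using content_sub_iff[OF _ submod_D] DX_ext by metis

lemma content_Fbar:
  assumes D: "is_domain_with_qf D" and g: "g \<noteq> 0"
  shows "content_D D g \<in> Fbar D"
proof -
  obtain i where "coeff g i \<noteq> 0" using g by (metis leading_coeff_0_iff)
  thus ?thesis using coeff_in_content[OF D, of g i] content_submod[OF D, of g]
    unfolding Fbar_def by auto
qed

lemma Fract_sum_common:
  fixes g :: "'b::idom"
  assumes "g \<noteq> 0"
  shows "(\<Sum>i\<in>A. Fract (f i) g) = Fract (\<Sum>i\<in>A. f i) g"
proof (induction A rule: infinite_finite_induct)
  case (infinite A) thus ?case by (simp add: Zero_fract_def eq_fract(3))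
next
  case empty thus ?case by (simp add: Zero_fract_def eq_fract(3))
next
  case (insert x F)
  have "Fract (f x) g + Fract (sum f F) g = Fract ((f x + sum f F) * g) (g * g)"
    using assms by (simp add: distrib_right)
  also have "\<dots> = Fract (f x + sum f F) g"
    using mult_fract_cancel[OF assms, of "f x + sum f F" g] by (simp add: mult.commute)
  finally show ?case using insert by simp
qed

lemma mod_prod_Fract:
  assumes D: "is_domain_with_qf D" and S: "mult_subset D S" and E: "is_submodule D E"
    and z: "z \<in> mod_prod (embK ` E) (locX D S)"
  shows "\<exists>h g. g \<in> S \<and> h \<in> ext_ideal E \<and> z = Fract h g"
proof -
  obtain n :: nat and a b where z: "z = (\<Sum>i<n. a i * b i)" and ab: "\<forall>i<n. a i \<in> embK ` E \<and> b i \<in> locX D S"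
    using z unfolding mod_prod_def mem_Collect_eq
    by blast
  have S0: "0 \<notin> S" "1 \<in> S" "S \<subseteq> DX D" "\<And>f g. f \<in> S \<Longrightarrow> g \<in> S \<Longrightarrow> f * g \<in> S"
    using S unfolding mult_subset_def by auto
  have "\<forall>i<(m::nat). a i \<in> embK ` E \<and> b i \<in> locX D S \<Longrightarrow>
        \<exists>h g. g \<in> S \<and> h \<in> ext_ideal E \<and> (\<Sum>i<m. a i * b i) = Fract h g" for m
  proof (induction m)
    case 0
    show ?case using S0 ext_zero[OF E] by (intro exI[of _ 0] exI[of _ 1]) (simp add: Zero_fract_def)
  next
    case (Suc m)
    then obtain h g where hg: "g \<in> S" "h \<in> ext_ideal E" "(\<Sum>i<m. a i * b i) = Fract h g" by auto
    obtain e where e: "e \<in> E" "a m = embK e" using Suc.prems by auto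
    obtain f g' where fg: "f \<in> DX D" "g' \<in> S" "b m = Fract f g'"
      using Suc.prems unfolding locX_def by auto
    have g0: "g \<noteq> 0" "g' \<noteq> 0" using hg fg S0 by auto
    have "a m * b m = Fract (smult e f) g'" using e fg by (simp add: embK_def)
    hence "(\<Sum>i<Suc m. a i * b i) = Fract (h * g' + smult e f * g) (g * g')"
      using hg g0 by simp
    moreover have "h * g' + smult e f * g \<in> ext_ideal E"
    proof (rule ext_add[OF E])
      show "h * g' \<in> ext_ideal E" using ext_mult[OF E hg(2)] fg S0 by blast
      have "coeff f i * e \<in> E" for i
        using e E fg unfolding ext_ideal_def DX_def is_submodule_def by blast
      hence "smult e f \<in> ext_ideal E"
        unfolding ext_ideal_def by (auto simp: mult.commute)
      thus "smult e f * g \<in> ext_ideal E" using ext_mult[OF E] hg S0 by blast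
    qed
    ultimately show ?case using hg fg S0 by blast
  qed
  thus ?thesis using ab z by blast
qed

lemma circ_char:
  assumes D: "is_domain_with_qf D" and S: "mult_subset D S" and E: "is_submodule D E"
  shows "c \<in> circ_op D S E \<longleftrightarrow> (\<exists>g\<in>S. smult c g \<in> ext_ideal E)"
proof
  have S0: "0 \<notin> S" "S \<subseteq> DX D" using S unfolding mult_subset_def by auto
  assume "c \<in> circ_op D S E"
  then obtain h g where hg: "g \<in> S" "h \<in> ext_ideal E" "embK c = Fract h g"
    using mod_prod_Fract[OF D S E] unfolding circ_op_def by blast
  have "g \<noteq> 0" using hg S0 by auto
  hence "[:c:] * g = h * 1" using hg(3) unfolding embK_def by (simp add: eq_fract)
  thus "\<exists>g\<in>S. smult c g \<in> ext_ideal E" using hg by auto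
next
  have S0: "0 \<notin> S" "S \<subseteq> DX D" using S unfolding mult_subset_def by auto
  assume "\<exists>g\<in>S. smult c g \<in> ext_ideal E"
  then obtain g where g: "g \<in> S" "smult c g \<in> ext_ideal E" by auto
  define h where "h = smult c g"
  have g0: "g \<noteq> 0" using g S0 by auto
  define n where "n = Suc (degree h)"
  define a where "a i = embK (coeff h i)" for i
  define b where "b i = Fract (monom 1 i) g" for i
  have mono: "monom 1 i \<in> DX D" for i using dom_basic[OF D] unfolding DX_def by auto
  have "(\<Sum>i<n. a i * b i) = (\<Sum>i<n. Fract (monom (coeff h i) i) g)"
    unfolding a_def b_def embK_def by (simp add: smult_monom)
  also have "\<dots> = Fract (\<Sum>i<n. monom (coeff h i) i) g" by (rule Fract_sum_common[OF g0])
  also have "(\<Sum>i<n. monom (coeff h i) i) = h"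
    unfolding n_def lessThan_Suc_atMost by (rule poly_as_sum_of_monoms)
  also have "Fract h g = embK c" unfolding embK_def h_def using g0
    by (simp add: eq_fract)
  finally have "embK c = (\<Sum>i<n. a i * b i)" by simp
  moreover have "\<forall>i<n. a i \<in> embK ` E \<and> b i \<in> locX D S"
    using g mono unfolding a_def b_def locX_def h_def ext_ideal_def by blast
  ultimately show "c \<in> circ_op D S E" unfolding circ_op_def mod_prod_def by blast
qed


context
  fixes D :: "'a::field set" and S :: "'a poly set"
  assumes D: "is_domain_with_qf D" and S: "mult_subset D S"
begin

lemma S_props: "0 \<notin> S" "1 \<in> S" "S \<subseteq> DX D" "\<And>f g. f \<in> S \<Longrightarrow> g \<in> S \<Longrightarrow> f * g \<in> S"
  using S unfolding mult_subset_def by auto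

lemma circ_mono:
  assumes "is_submodule D E" "is_submodule D F" "E \<subseteq> F"
  shows "circ_op D S E \<subseteq> circ_op D S F"
  using assms circ_char[OF D S] unfolding ext_ideal_def by blast

lemma smult_one_ext: "is_submodule D E \<Longrightarrow> c \<in> E \<Longrightarrow> smult c 1 \<in> ext_ideal E"
  unfolding ext_ideal_def is_submodule_def by (auto simp: coeff_pCons split: nat.splits)

lemma circ_extensive:
  assumes E: "is_submodule D E"
  shows "E \<subseteq> circ_op D S E"
  using circ_char[OF D S E] smult_one_ext[OF E] S_props by blast

lemma common_witness:
  assumes E: "is_submodule D E" and A: "finite A" "A \<subseteq> circ_op D S E"
  shows "\<exists>H\<in>S. \<forall>y\<in>A. smult y H \<in> ext_ideal E"
  using A
proof (induction A rule: finite_induct)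
  case empty thus ?case using S_props by auto
next
  case (insert a A)
  then obtain H where H: "H \<in> S" "\<forall>y\<in>A. smult y H \<in> ext_ideal E" by auto
  obtain h where h: "h \<in> S" "smult a h \<in> ext_ideal E"
    using insert.prems circ_char[OF D S E] by auto
  have "smult y (H * h) \<in> ext_ideal E" if "y \<in> insert a A" for y
  proof (cases "y = a")
    case True
    have "smult a h * H \<in> ext_ideal E" using ext_mult(1)[OF E h(2)] H S_props by blast
    thus ?thesis using True by (simp add: mult.commute)
  next
    case False
    hence "smult y H * h \<in> ext_ideal E" using ext_mult(1)[OF E] H h S_props that by blast
    thus ?thesis by simp
  qed
  thus ?case using H h S_props by blast
qed

lemma circ_submod:
  assumes E: "is_submodule D E"
  shows "is_submodule D (circ_op D S E)"
proof -
  have z: "0 \<in> circ_op D S E" using circ_extensive[OF E] E unfolding is_submodule_def by auto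
  have add: "x + y \<in> circ_op D S E" if hx: "x \<in> circ_op D S E" and hy: "y \<in> circ_op D S E" for x y
  proof -
    obtain H where H: "H \<in> S" "smult x H \<in> ext_ideal E" "smult y H \<in> ext_ideal E"
      using common_witness[OF E, of "{x,y}"] hx hy by auto
    have "smult (x + y) H = smult x H + smult y H" by (simp add: smult_add_left)
    hence "smult (x + y) H \<in> ext_ideal E" using ext_add[OF E H(2,3)] by simp
    thus ?thesis using circ_char[OF D S E] H by auto
  qed
  have sc: "d * x \<in> circ_op D S E" if hd: "d \<in> D" and hx: "x \<in> circ_op D S E" for d x
  proof -
    obtain H where H: "H \<in> S" "smult x H \<in> ext_ideal E" using circ_char[OF D S E] hx by auto
    have "smult d (smult x H) \<in> ext_ideal E" by (rule ext_smult[OF E H(2) hd])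
    thus ?thesis using circ_char[OF D S E] H by auto
  qed
  show ?thesis unfolding is_submodule_def using z add sc by blast
qed

lemma circ_Fbar: "E \<in> Fbar D \<Longrightarrow> circ_op D S E \<in> Fbar D"
proof -
  assume "E \<in> Fbar D"
  hence E: "is_submodule D E" "E \<noteq> {0}" unfolding Fbar_def by auto
  have "circ_op D S E \<noteq> {0}"
  proof
    assume "circ_op D S E = {0}"
    hence "E \<subseteq> {0}" using circ_extensive[OF E(1)] by auto
    thus False using E unfolding is_submodule_def by auto
  qed
  thus ?thesis using circ_submod[OF E(1)] unfolding Fbar_def by auto
qed

lemma circ_idem:
  assumes E: "is_submodule D E"
  shows "circ_op D S (circ_op D S E) = circ_op D S E"
proof
  show "circ_op D S E \<subseteq> circ_op D S (circ_op D S E)"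
    by (rule circ_extensive[OF circ_submod[OF E]])
next
  show "circ_op D S (circ_op D S E) \<subseteq> circ_op D S E"
  proof
    fix y assume "y \<in> circ_op D S (circ_op D S E)"
    then obtain g where g: "g \<in> S" "smult y g \<in> ext_ideal (circ_op D S E)"
      using circ_char[OF D S circ_submod[OF E]] by auto
    let ?A = "(\<lambda>i. coeff (smult y g) i) ` {..degree g}"
    have "?A \<subseteq> circ_op D S E" using g(2) unfolding ext_ideal_def by auto
    then obtain H where H: "H \<in> S" "\<forall>z\<in>?A. smult z H \<in> ext_ideal E"
      using common_witness[OF E] by blast
    have "coeff (smult y g * H) n \<in> E" for n
      unfolding coeff_mult
    proof (rule submod_sum[OF E])
      fix i assume "i \<in> {..n}"
      show "coeff (smult y g) i * coeff H (n - i) \<in> E"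
      proof (cases "i \<le> degree g")
        case True
        hence "coeff (smult (coeff (smult y g) i) H) (n - i) \<in> E"
          using H unfolding ext_ideal_def by auto
        thus ?thesis by simp
      next
        case False
        hence "coeff g i = 0" by (simp add: coeff_eq_0)
        thus ?thesis using E unfolding is_submodule_def by simp
      qed
    qed
    hence "smult y (g * H) \<in> ext_ideal E" unfolding ext_ideal_def by simp
    thus "y \<in> circ_op D S E" using circ_char[OF D S E] g H S_props by blast
  qed
qed

lemma ext_ideal_scale:
  fixes x :: 'a
  assumes x: "x \<noteq> 0"
  shows "f \<in> ext_ideal ((\<lambda>e. x * e) ` E) \<longleftrightarrow> smult (inverse x) f \<in> ext_ideal E"
proof -
  have "c \<in> (\<lambda>e. x * e) ` A \<longleftrightarrow> inverse x * c \<in> A" for c and A :: "'a set"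
  proof
    assume "c \<in> (\<lambda>e. x * e) ` A"
    then obtain e where "e \<in> A" "c = x * e" by auto
    thus "inverse x * c \<in> A" using x by (simp add: mult.assoc[symmetric])
  next
    assume "inverse x * c \<in> A"
    moreover have "c = x * (inverse x * c)" using x by (simp add: mult.assoc[symmetric])
    ultimately show "c \<in> (\<lambda>e. x * e) ` A" by blast
  qed
  thus ?thesis unfolding ext_ideal_def by simp
qed

lemma circ_hom:
  assumes E: "is_submodule D E" and x: "x \<noteq> 0"
  shows "circ_op D S ((\<lambda>e. x * e) ` E) = (\<lambda>e. x * e) ` circ_op D S E"
proof -
  have mem: "c \<in> (\<lambda>e. x * e) ` A \<longleftrightarrow> inverse x * c \<in> A" for c and A :: "'a set"
  proof
    assume "c \<in> (\<lambda>e. x * e) ` A"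
    then obtain e where "e \<in> A" "c = x * e" by auto
    thus "inverse x * c \<in> A" using x by (simp add: mult.assoc[symmetric])
  next
    assume "inverse x * c \<in> A"
    moreover have "c = x * (inverse x * c)" using x by (simp add: mult.assoc[symmetric])
    ultimately show "c \<in> (\<lambda>e. x * e) ` A" by blast
  qed
  show ?thesis
  proof (rule set_eqI)
    fix c
    have "c \<in> circ_op D S ((\<lambda>e. x * e) ` E) \<longleftrightarrow> (\<exists>g\<in>S. smult (inverse x) (smult c g) \<in> ext_ideal E)"
      using circ_char[OF D S submod_scale[OF E]] ext_ideal_scale[OF x] by blast
    also have "\<dots> \<longleftrightarrow> inverse x * c \<in> circ_op D S E"
      using circ_char[OF D S E] by simp
    also have "\<dots> \<longleftrightarrow> c \<in> (\<lambda>e. x * e) ` circ_op D S E" using mem by simp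
    finally show "c \<in> circ_op D S ((\<lambda>e. x * e) ` E) \<longleftrightarrow> c \<in> (\<lambda>e. x * e) ` circ_op D S E" .
  qed
qed

lemma circ_stable:
  assumes E: "is_submodule D E" and F: "is_submodule D F"
  shows "circ_op D S (E \<inter> F) = circ_op D S E \<inter> circ_op D S F"
proof
  show "circ_op D S (E \<inter> F) \<subseteq> circ_op D S E \<inter> circ_op D S F"
    using circ_mono[OF submod_Int[OF E F] E] circ_mono[OF submod_Int[OF E F] F] by auto
next
  show "circ_op D S E \<inter> circ_op D S F \<subseteq> circ_op D S (E \<inter> F)"
  proof
    fix c assume c: "c \<in> circ_op D S E \<inter> circ_op D S F"
    obtain g where g: "g \<in> S" "smult c g \<in> ext_ideal E" using c circ_char[OF D S E] by auto
    obtain h where h: "h \<in> S" "smult c h \<in> ext_ideal F" using c circ_char[OF D S F] by auto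
    have "smult c g * h \<in> ext_ideal E" using ext_mult(1)[OF E g(2)] h S_props by blast
    moreover have "smult c h * g \<in> ext_ideal F" using ext_mult(1)[OF F h(2)] g S_props by blast
    ultimately have "smult c (g * h) \<in> ext_ideal (E \<inter> F)"
      unfolding ext_ideal_def by (simp add: mult.commute)
    thus "c \<in> circ_op D S (E \<inter> F)" using circ_char[OF D S submod_Int[OF E F]] g h S_props by blast
  qed
qed

end

lemma Fbar_scale:
  assumes "E \<in> Fbar D" "x \<noteq> 0"
  shows "(\<lambda>e. x * e) ` E \<in> Fbar D"
proof -
  have E: "is_submodule D E" "E \<noteq> {0}" using assms unfolding Fbar_def by auto
  then obtain e where "e \<in> E" "e \<noteq> 0" unfolding is_submodule_def by auto
  hence "x * e \<in> (\<lambda>e. x * e) ` E" "x * e \<noteq> 0" using assms by auto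
  hence "(\<lambda>e. x * e) ` E \<noteq> {0}" by blast
  thus ?thesis using submod_scale[OF E(1)] unfolding Fbar_def by auto
qed

lemma Fbar_Int:
  assumes D: "is_domain_with_qf D" and "E \<in> Fbar D" "F \<in> Fbar D"
  shows "E \<inter> F \<in> Fbar D"
proof -
  have E: "is_submodule D E" "E \<noteq> {0}" and F: "is_submodule D F" "F \<noteq> {0}"
    using assms unfolding Fbar_def by auto
  obtain e where e: "e \<in> E" "e \<noteq> 0" using E unfolding is_submodule_def by auto
  obtain f where f: "f \<in> F" "f \<noteq> 0" using F unfolding is_submodule_def by auto
  obtain a b where ab: "a \<in> D" "b \<in> D" "b \<noteq> 0" "e = a / b" using dom_basic(7)[OF D] by blast
  obtain c d where cd: "c \<in> D" "d \<in> D" "d \<noteq> 0" "f = c / d" using dom_basic(7)[OF D] by blast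
  have eq1: "a * c = (b * c) * e" using ab by (simp add: field_simps)
  have "b * c \<in> D" using ab cd dom_basic[OF D] by auto
  hence "(b * c) * e \<in> E" using E e unfolding is_submodule_def by blast
  hence 1: "a * c \<in> E" by (simp only: eq1)
  have eq2: "a * c = (a * d) * f" using cd by (simp add: field_simps)
  have "a * d \<in> D" using ab cd dom_basic[OF D] by auto
  hence "(a * d) * f \<in> F" using F f unfolding is_submodule_def by blast
  hence 2: "a * c \<in> F" by (simp only: eq2)
  have "a \<noteq> 0" "c \<noteq> 0" using ab cd e f by auto
  hence "a * c \<noteq> 0" by simp
  hence "E \<inter> F \<noteq> {0}" using 1 2 by blast
  thus ?thesis using submod_Int[OF E(1) F(1)] unfolding Fbar_def by simp
qed

lemma Fbar_submod: "E \<in> Fbar D \<Longrightarrow> is_submodule D E"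
  unfolding Fbar_def by auto

lemma D_Fbar: "is_domain_with_qf D \<Longrightarrow> D \<in> Fbar D"
  using submod_D[of D] dom_basic[of D] unfolding Fbar_def by auto

lemma fg_Fbar: "is_domain_with_qf D \<Longrightarrow> fg_frac_ideals D \<subseteq> Fbar D"
  unfolding fg_frac_ideals_def Fbar_def using gen_mod_submod by blast

context
  fixes D :: "'a::field set" and S :: "'a poly set"
  assumes D: "is_domain_with_qf D" and S: "mult_subset D S"
begin

lemma circ_finite_type:
  assumes E: "E \<in> Fbar D"
  shows "circ_op D S E = \<Union>{circ_op D S F | F. F \<in> fg_frac_ideals D \<and> F \<subseteq> E}"
proof
  show "\<Union>{circ_op D S F | F. F \<in> fg_frac_ideals D \<and> F \<subseteq> E} \<subseteq> circ_op D S E"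
    using circ_mono[OF D S] fg_Fbar[OF D] Fbar_submod E by blast
next
  show "circ_op D S E \<subseteq> \<Union>{circ_op D S F | F. F \<in> fg_frac_ideals D \<and> F \<subseteq> E}"
  proof
    fix c assume c: "c \<in> circ_op D S E"
    have Es: "is_submodule D E" using E Fbar_submod by auto
    show "c \<in> \<Union>{circ_op D S F | F. F \<in> fg_frac_ideals D \<and> F \<subseteq> E}"
    proof (cases "c = 0")
      case True
      obtain e where e: "e \<in> E" "e \<noteq> 0" using E unfolding Fbar_def is_submodule_def by auto
      define F where "F = gen_mod D {e}"
      have "F \<subseteq> E" unfolding F_def using gen_mod_least[OF Es] e by auto
      moreover have "e \<in> F" unfolding F_def by (rule gen_mod_gen[OF D]) auto
      hence "F \<in> fg_frac_ideals D" unfolding fg_frac_ideals_def F_def using e by blast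
      moreover have "0 \<in> circ_op D S F"
        using circ_submod[OF D S gen_mod_submod[OF D]] unfolding F_def is_submodule_def by auto
      ultimately show ?thesis using True by blast
    next
      case False
      obtain g where g: "g \<in> S" "smult c g \<in> ext_ideal E" using c circ_char[OF D S Es] by auto
      define A where "A = (\<lambda>i. c * coeff g i) ` {..degree g}"
      define F where "F = gen_mod D A"
      have "A \<subseteq> E" using g unfolding A_def ext_ideal_def by auto
      hence FE: "F \<subseteq> E" unfolding F_def using gen_mod_least[OF Es] by auto
      have "g \<noteq> 0" using g S_props[OF D S] by auto
      hence "c * coeff g (degree g) \<noteq> 0" using False by simp
      moreover have "c * coeff g (degree g) \<in> F" unfolding F_def A_def by (rule gen_mod_gen[OF D]) auto
      ultimately have "F \<in> fg_frac_ideals D" unfolding fg_frac_ideals_def F_def A_def by blast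
      moreover have "smult c g \<in> ext_ideal F"
      proof (rule ext_idealI)
        fix i show "coeff (smult c g) i \<in> F"
        proof (cases "i \<le> degree g")
          case True thus ?thesis unfolding F_def A_def by (auto intro!: gen_mod_gen[OF D])
        next
          case False
          hence "coeff g i = 0" by (simp add: coeff_eq_0)
          thus ?thesis using gen_mod_submod[OF D] unfolding F_def is_submodule_def by simp
        qed
      qed
      hence "c \<in> circ_op D S F" using circ_char[OF D S gen_mod_submod[OF D]] g unfolding F_def by blast
      ultimately show ?thesis using FE by blast
    qed
  qed
qed

lemma circ_semistar_all:
  "semistar D (restrict (circ_op D S) (Fbar D)) \<and> semistar_stable D (restrict (circ_op D S) (Fbar D)) \<and>
   semistar_finite_type D (restrict (circ_op D S) (Fbar D)) \<and>
   restrict (circ_op D S) (Fbar D) \<in> extensional (Fbar D)"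
proof (intro conjI)
  show "semistar D (restrict (circ_op D S) (Fbar D))"
    unfolding semistar_def
  proof (intro conjI ballI allI impI)
    fix E assume E: "E \<in> Fbar D"
    thus "restrict (circ_op D S) (Fbar D) E \<in> Fbar D" using circ_Fbar[OF D S] by simp
    show "E \<subseteq> restrict (circ_op D S) (Fbar D) E" using E circ_extensive[OF D S Fbar_submod[OF E]] by simp
    show "restrict (circ_op D S) (Fbar D) (restrict (circ_op D S) (Fbar D) E) =
          restrict (circ_op D S) (Fbar D) E"
      using E circ_Fbar[OF D S E] circ_idem[OF D S Fbar_submod[OF E]] by simp
  next
    fix x :: 'a and E assume x: "x \<noteq> 0" and E: "E \<in> Fbar D"
    have "(\<lambda>e. x * e) ` E \<in> Fbar D" by (rule Fbar_scale[OF E x])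
    thus "restrict (circ_op D S) (Fbar D) ((\<lambda>e. x * e) ` E) =
          (\<lambda>e. x * e) ` restrict (circ_op D S) (Fbar D) E"
      using E circ_hom[OF D S Fbar_submod[OF E] x] by simp
  next
    fix E F assume EF: "E \<in> Fbar D" "F \<in> Fbar D" "E \<subseteq> F"
    thus "restrict (circ_op D S) (Fbar D) E \<subseteq> restrict (circ_op D S) (Fbar D) F"
      using circ_mono[OF D S Fbar_submod[OF EF(1)] Fbar_submod[OF EF(2)] EF(3)] by simp
  qed
  show "semistar_stable D (restrict (circ_op D S) (Fbar D))"
    unfolding semistar_stable_def
  proof (intro ballI)
    fix E F assume EF: "E \<in> Fbar D" "F \<in> Fbar D"
    thus "restrict (circ_op D S) (Fbar D) (E \<inter> F) =
          restrict (circ_op D S) (Fbar D) E \<inter> restrict (circ_op D S) (Fbar D) F"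
      using Fbar_Int[OF D EF] circ_stable[OF D S Fbar_submod[OF EF(1)] Fbar_submod[OF EF(2)]] by simp
  qed
  show "semistar_finite_type D (restrict (circ_op D S) (Fbar D))"
    unfolding semistar_finite_type_def
  proof (intro ballI)
    fix E assume E: "E \<in> Fbar D"
    have "{restrict (circ_op D S) (Fbar D) F |F. F \<in> fg_frac_ideals D \<and> F \<subseteq> E} =
          {circ_op D S F |F. F \<in> fg_frac_ideals D \<and> F \<subseteq> E}"
      using fg_Fbar[OF D] by auto
    thus "restrict (circ_op D S) (Fbar D) E =
          \<Union>{restrict (circ_op D S) (Fbar D) F |F. F \<in> fg_frac_ideals D \<and> F \<subseteq> E}"
      using circ_finite_type[OF E] E by simp
  qed
qed auto

end

lemma colon_anti: "A \<subseteq> B \<Longrightarrow> colon D B \<subseteq> colon D A"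
  unfolding colon_def by auto

lemma colon_colon: "A \<subseteq> colon D (colon D A)"
  unfolding colon_def by (auto simp: mult.commute)

lemma colon_DD: assumes D: "is_domain_with_qf D" shows "colon D D = D"
proof
  show "colon D D \<subseteq> D"
  proof
    fix x assume "x \<in> colon D D"
    hence "x * 1 \<in> D" unfolding colon_def using dom_basic(2)[OF D] by blast
    thus "x \<in> D" by simp
  qed
  show "D \<subseteq> colon D D" unfolding colon_def using dom_basic(5)[OF D] by auto
qed

lemma colon_scale_iff: "x \<in> colon D A \<longleftrightarrow> (\<lambda>e. x * e) ` A \<subseteq> D"
  unfolding colon_def by auto

lemma v_eq_D_iff:
  assumes D: "is_domain_with_qf D" and A: "A \<subseteq> D"
  shows "colon D (colon D A) = D \<longleftrightarrow> colon D A \<subseteq> D"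
proof
  assume h: "colon D (colon D A) = D"
  have "colon D A \<subseteq> colon D (colon D (colon D A))" by (rule colon_colon)
  thus "colon D A \<subseteq> D" using h colon_DD[OF D] by simp
next
  assume h: "colon D A \<subseteq> D"
  have "D \<subseteq> colon D A" using A dom_basic[OF D] unfolding colon_def by auto
  hence "colon D A = D" using h by auto
  thus "colon D (colon D A) = D" using colon_DD[OF D] by simp
qed

lemma colon_content:
  assumes D: "is_domain_with_qf D"
  shows "x \<in> colon D (content_D D g) \<longleftrightarrow> smult x g \<in> ext_ideal D"
  using content_scale_sub_iff[OF D submod_D[OF D]] colon_scale_iff by metis

lemma Nstar_v_iff:
  assumes D: "is_domain_with_qf D"
  shows "g \<in> Nstar D (v_op D) \<longleftrightarrow> g \<in> DX D \<and> g \<noteq> 0 \<and> colon D (content_D D g) \<subseteq> D"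
proof -
  have "v_op D D = D" unfolding v_op_def using colon_DD[OF D] by simp
  moreover have "g \<in> DX D \<Longrightarrow> v_op D (content_D D g) = D \<longleftrightarrow> colon D (content_D D g) \<subseteq> D"
    unfolding v_op_def by (rule v_eq_D_iff[OF D content_sub_D[OF D]])
  ultimately show ?thesis unfolding Nstar_def by auto
qed

lemma part_f1:
  assumes D: "is_domain_with_qf D" and S: "mult_subset D S"
  shows "circ_op D S D = D \<longleftrightarrow> S \<subseteq> Nstar D (v_op D)"
proof
  assume h: "circ_op D S D = D"
  show "S \<subseteq> Nstar D (v_op D)"
  proof
    fix g assume g: "g \<in> S"
    have "colon D (content_D D g) \<subseteq> D"
    proof
      fix x assume "x \<in> colon D (content_D D g)"
      hence "smult x g \<in> ext_ideal D" using colon_content[OF D] by auto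
      hence "x \<in> circ_op D S D" using circ_char[OF D S submod_D[OF D]] g by auto
      thus "x \<in> D" using h by simp
    qed
    thus "g \<in> Nstar D (v_op D)" using Nstar_v_iff[OF D] g S_props[OF D S] by auto
  qed
next
  assume h: "S \<subseteq> Nstar D (v_op D)"
  show "circ_op D S D = D"
  proof
    show "circ_op D S D \<subseteq> D"
    proof
      fix x assume "x \<in> circ_op D S D"
      then obtain g where g: "g \<in> S" "smult x g \<in> ext_ideal D"
        using circ_char[OF D S submod_D[OF D]] by auto
      hence "x \<in> colon D (content_D D g)" using colon_content[OF D] by auto
      thus "x \<in> D" using h g Nstar_v_iff[OF D] by auto
    qed
    show "D \<subseteq> circ_op D S D" by (rule circ_extensive[OF D S submod_D[OF D]])
  qed
qed

lemma Spec_submod: "P \<in> Spec D \<Longrightarrow> is_submodule D P"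
  unfolding Spec_def is_submodule_def by auto

lemma ext_ideal_zero: "ext_ideal {0} = {0}"
  unfolding ext_ideal_def by (auto simp: poly_eq_iff)

lemma Delta_char:
  assumes D: "is_domain_with_qf D" and S: "mult_subset D S" and P: "P \<in> Spec D"
  shows "ext_ideal P \<inter> S = {} \<longleftrightarrow> P = {0} \<or> 1 \<notin> restrict (circ_op D S) (Fbar D) P"
proof (cases "P = {0}")
  case True
  have "ext_ideal P \<inter> S = {}" using True ext_ideal_zero S_props(1)[OF D S] by (metis disjoint_iff singletonD)
  thus ?thesis using True by simp
next
  case False
  hence PF: "P \<in> Fbar D" using Spec_submod[OF P] unfolding Fbar_def by auto
  have "1 \<in> circ_op D S P \<longleftrightarrow> (\<exists>g\<in>S. g \<in> ext_ideal P)"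
    using circ_char[OF D S Spec_submod[OF P]] by simp
  thus ?thesis using PF False by auto
qed

lemma ext_sat_char:
  assumes D: "is_domain_with_qf D" and S: "mult_subset D S"
  shows "ext_sat D S = DX D - \<Union>{ext_ideal P |P. P \<in> Spec D \<and>
            (P = {0} \<or> 1 \<notin> restrict (circ_op D S) (Fbar D) P)}"
  unfolding ext_sat_def using Delta_char[OF D S] by blast

lemma circ_inj:
  assumes D: "is_domain_with_qf D"
  shows "inj_on (\<lambda>T. restrict (circ_op D T) (Fbar D)) {T. mult_subset D T \<and> is_ext_saturated D T}"
proof (rule inj_onI)
  fix T1 T2 assume T1: "T1 \<in> {T. mult_subset D T \<and> is_ext_saturated D T}"
    and T2: "T2 \<in> {T. mult_subset D T \<and> is_ext_saturated D T}"
    and eq: "restrict (circ_op D T1) (Fbar D) = restrict (circ_op D T2) (Fbar D)"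
  have m: "mult_subset D T1" "mult_subset D T2" using T1 T2 by auto
  have "T1 = ext_sat D T1" "T2 = ext_sat D T2" using T1 T2 unfolding is_ext_saturated_def by auto
  moreover have "ext_sat D T1 = ext_sat D T2"
    unfolding ext_sat_char[OF D m(1)] ext_sat_char[OF D m(2)] eq by (rule refl)
  ultimately show "T1 = T2" by simp
qed


definition idl :: "'a::field set \<Rightarrow> 'a set \<Rightarrow> bool" where
  "idl D J \<longleftrightarrow> J \<subseteq> D \<and> is_submodule D J"

definition addI :: "'a::field set \<Rightarrow> 'a set \<Rightarrow> 'a \<Rightarrow> 'a set" where
  "addI D M a = {m + a * d | m d. m \<in> M \<and> d \<in> D}"

lemma zorn_above:
  assumes "Q I"
    and ch: "\<And>C. C \<noteq> {} \<Longrightarrow> subset.chain {J. Q J \<and> I \<subseteq> J} C \<Longrightarrow> Q (\<Union>C)"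
  shows "\<exists>M. Q M \<and> I \<subseteq> M \<and> (\<forall>J. Q J \<and> M \<subseteq> J \<longrightarrow> J = M)"
proof -
  have "\<exists>M\<in>{J. Q J \<and> I \<subseteq> J}. \<forall>X\<in>{J. Q J \<and> I \<subseteq> J}. M \<subseteq> X \<longrightarrow> X = M"
  proof (rule subset_Zorn_nonempty)
    show "{J. Q J \<and> I \<subseteq> J} \<noteq> {}" using assms by auto
    fix C assume C: "C \<noteq> {}" "subset.chain {J. Q J \<and> I \<subseteq> J} C"
    have "I \<subseteq> \<Union>C" using C unfolding subset_chain_def by blast
    thus "\<Union>C \<in> {J. Q J \<and> I \<subseteq> J}" using ch[OF C] by auto
  qed
  then obtain M where M: "Q M" "I \<subseteq> M" "\<And>X. Q X \<Longrightarrow> I \<subseteq> X \<Longrightarrow> M \<subseteq> X \<Longrightarrow> X = M"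
    by auto
  have "\<forall>J. Q J \<and> M \<subseteq> J \<longrightarrow> J = M"
  proof (intro allI impI)
    fix J assume "Q J \<and> M \<subseteq> J"
    thus "J = M" using M(3)[of J] M(2) by auto
  qed
  thus ?thesis using M(1,2) by blast
qed

lemma chain_idl:
  assumes "C \<noteq> {}" "subset.chain A C" "\<And>J. J \<in> C \<Longrightarrow> idl D J"
  shows "idl D (\<Union>C)"
proof -
  have ch: "\<forall>X\<in>C. \<forall>Y\<in>C. X \<subseteq> Y \<or> Y \<subseteq> X" using assms(2) unfolding subset_chain_def by auto
  have "0 \<in> \<Union>C" using assms(1,3) unfolding idl_def is_submodule_def by auto
  moreover have "x + y \<in> \<Union>C" if hx: "x \<in> \<Union>C" and hy: "y \<in> \<Union>C" for x y
  proof -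
    obtain X Y where "X \<in> C" "Y \<in> C" "x \<in> X" "y \<in> Y" using hx hy by auto
    thus ?thesis using ch assms(3) unfolding idl_def is_submodule_def by (metis UnionI subsetD)
  qed
  moreover have "d * x \<in> \<Union>C" if "d \<in> D" "x \<in> \<Union>C" for d x
    using that assms(3) unfolding idl_def is_submodule_def by blast
  moreover have "\<Union>C \<subseteq> D" using assms(3) unfolding idl_def by auto
  ultimately show ?thesis unfolding idl_def is_submodule_def by blast
qed

lemma chain_finite_sub:
  assumes "C \<noteq> {}" "subset.chain A C" "finite B" "B \<subseteq> \<Union>C"
  obtains J where "J \<in> C" "B \<subseteq> J"
  using finite_subset_Union_chain[OF assms(3,4,1,2)] by blast

lemma chain_poly_sub:
  assumes "C \<noteq> {}" "subset.chain A C" "f \<in> ext_ideal (\<Union>C)" "\<And>J. J \<in> C \<Longrightarrow> 0 \<in> J"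
  obtains J where "J \<in> C" "f \<in> ext_ideal J"
proof -
  have "coeff f ` {..degree f} \<subseteq> \<Union>C" using assms(3) unfolding ext_ideal_def by auto
  then obtain J where J: "J \<in> C" "coeff f ` {..degree f} \<subseteq> J"
    using chain_finite_sub[OF assms(1,2)] by blast
  have "coeff f i \<in> J" for i
    using J assms(4) by (cases "i \<le> degree f") (auto simp: coeff_eq_0)
  thus ?thesis using that J unfolding ext_ideal_def by auto
qed

lemma addI_mem: "m \<in> M \<Longrightarrow> d \<in> D \<Longrightarrow> m + a * d \<in> addI D M a"
  unfolding addI_def by blast

context
  fixes D :: "'a::field set"
  assumes D: "is_domain_with_qf D"
begin

lemma idl_D: "idl D D"
  unfolding idl_def using submod_D[OF D] by auto

lemma addI_idl:
  assumes M: "idl D M" and a: "a \<in> D"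
  shows "idl D (addI D M a)" "M \<subseteq> addI D M a" "a \<in> addI D M a"
proof -
  note dB = dom_basic[OF D]
  have "m = m + a * 0" for m by simp
  thus "M \<subseteq> addI D M a" unfolding addI_def using dB by blast
  have "a = 0 + a * 1" by simp
  thus "a \<in> addI D M a" unfolding addI_def using dB M unfolding idl_def is_submodule_def by blast
  have sub: "addI D M a \<subseteq> D"
    unfolding addI_def using M a dB unfolding idl_def by auto
  have "(0::'a) = 0 + a * 0" by simp
  hence z: "0 \<in> addI D M a" unfolding addI_def using M dB unfolding idl_def is_submodule_def by blast
  have add: "x + y \<in> addI D M a" if "x \<in> addI D M a" "y \<in> addI D M a" for x y
  proof -
    from that obtain m1 d1 m2 d2 where "x = m1 + a * d1" "y = m2 + a * d2" "m1 \<in> M" "m2 \<in> M" "d1 \<in> D" "d2 \<in> D"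
      unfolding addI_def by blast
    moreover hence "x + y = (m1 + m2) + a * (d1 + d2)" by (simp add: algebra_simps)
    ultimately show ?thesis using M dB unfolding addI_def idl_def is_submodule_def by blast
  qed
  have sc: "d * x \<in> addI D M a" if hd: "d \<in> D" and hx: "x \<in> addI D M a" for d x
  proof -
    from hx obtain m1 d1 where 1: "x = m1 + a * d1" "m1 \<in> M" "d1 \<in> D"
      unfolding addI_def by blast
    hence eq: "d * x = d * m1 + a * (d * d1)" by (simp add: algebra_simps)
    have "d * m1 \<in> M" using M hd 1 unfolding idl_def is_submodule_def by blast
    moreover have "d * d1 \<in> D" using dB hd 1 by auto
    ultimately show ?thesis unfolding eq by (rule addI_mem)
  qed
  show "idl D (addI D M a)" unfolding idl_def is_submodule_def using sub z add sc by blast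
qed

lemma addI_prod:
  assumes M: "idl D M" and a: "a \<in> D" and b: "b \<in> D" and ab: "a * b \<in> M"
    and x: "x \<in> addI D M a" and y: "y \<in> addI D M b"
  shows "x * y \<in> M"
proof -
  note dB = dom_basic[OF D]
  from x obtain m1 d1 where 1: "x = m1 + a * d1" "m1 \<in> M" "d1 \<in> D" unfolding addI_def by blast
  from y obtain m2 d2 where 2: "y = m2 + b * d2" "m2 \<in> M" "d2 \<in> D" unfolding addI_def by blast
  have eq: "x * y = (m1 + a * d1) * m2 + (b * d2) * m1 + (d1 * d2) * (a * b)"
    unfolding 1 2 by (simp add: algebra_simps)
  have "(m1 + a * d1) \<in> D" "b * d2 \<in> D" "d1 * d2 \<in> D"
    using 1 2 a b dB M unfolding idl_def by auto
  hence "(m1 + a * d1) * m2 \<in> M" "(b * d2) * m1 \<in> M" "(d1 * d2) * (a * b) \<in> M"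
    using 1 2 ab M unfolding idl_def is_submodule_def by blast+
  thus ?thesis unfolding eq using M unfolding idl_def is_submodule_def by blast
qed

lemma Spec_idl: "P \<in> Spec D \<Longrightarrow> idl D P"
  unfolding idl_def using Spec_submod[of P D] unfolding Spec_def by auto

lemma one_notin_Spec: "P \<in> Spec D \<Longrightarrow> 1 \<notin> P"
proof
  assume P: "P \<in> Spec D" "1 \<in> P"
  hence "d * 1 \<in> P" if "d \<in> D" for d using that unfolding Spec_def by blast
  hence "D \<subseteq> P" by auto
  thus False using P unfolding Spec_def by auto
qed

lemma gauss_prime:
  assumes P: "P \<in> Spec D" and f: "f \<in> DX D" and g: "g \<in> DX D"
    and nf: "f \<notin> ext_ideal P" and ng: "g \<notin> ext_ideal P"
  shows "f * g \<notin> ext_ideal P"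
proof
  assume fg: "f * g \<in> ext_ideal P"
  have Ps: "is_submodule D P" using Spec_submod[OF P] .
  have Pprime: "\<And>x y. x \<in> D \<Longrightarrow> y \<in> D \<Longrightarrow> x * y \<in> P \<Longrightarrow> x \<in> P \<or> y \<in> P"
    using P unfolding Spec_def by blast
  have Pmul: "\<And>d x. d \<in> D \<Longrightarrow> x \<in> P \<Longrightarrow> d * x \<in> P" using Ps unfolding is_submodule_def by blast
  define i where "i = (LEAST i. coeff f i \<notin> P)"
  define j where "j = (LEAST j. coeff g j \<notin> P)"
  have ex: "\<exists>i. coeff f i \<notin> P" "\<exists>j. coeff g j \<notin> P" using nf ng unfolding ext_ideal_def by auto
  have fi: "coeff f i \<notin> P" unfolding i_def by (rule LeastI_ex[OF ex(1)])
  have gj: "coeff g j \<notin> P" unfolding j_def by (rule LeastI_ex[OF ex(2)])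
  have fk: "coeff f k \<in> P" if "k < i" for k using not_less_Least[of k "\<lambda>i. coeff f i \<notin> P"] that i_def by auto
  have gk: "coeff g k \<in> P" if "k < j" for k using not_less_Least[of k "\<lambda>j. coeff g j \<notin> P"] that j_def by auto
  have fD: "coeff f k \<in> D" for k using f unfolding DX_def by auto
  have gD: "coeff g k \<in> D" for k using g unfolding DX_def by auto
  define n where "n = i + j"
  have "coeff (f * g) n = coeff f i * coeff g (n - i) + (\<Sum>k\<in>{..n} - {i}. coeff f k * coeff g (n - k))"
    unfolding coeff_mult n_def by (subst sum.remove[of _ i]) auto
  moreover have "(\<Sum>k\<in>{..n} - {i}. coeff f k * coeff g (n - k)) \<in> P"
  proof (rule submod_sum[OF Ps])
    fix k assume k: "k \<in> {..n} - {i}"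
    show "coeff f k * coeff g (n - k) \<in> P"
    proof (cases "k < i")
      case True thus ?thesis using Pmul[OF gD fk[OF True]] by (simp add: mult.commute)
    next
      case False
      hence "n - k < j" using k unfolding n_def by auto
      thus ?thesis using Pmul[OF fD gk] by simp
    qed
  qed
  moreover have "coeff (f * g) n \<in> P" using fg unfolding ext_ideal_def by auto
  ultimately have "coeff f i * coeff g j \<in> P"
    using submod_diff[OF D Ps] unfolding n_def by (metis add_diff_cancel_left' add_diff_cancel_right')
  thus False using Pprime[OF fD gD] fi gj by auto
qed

end

context
  fixes D :: "'a::field set" and S :: "'a poly set"
  assumes D: "is_domain_with_qf D" and S: "mult_subset D S"
begin

lemma Delta_zorn:
  assumes I: "idl D I" and IS: "ext_ideal I \<inter> S = {}"
  shows "\<exists>M\<in>Nabla D S. I \<subseteq> M"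
proof -
  define Q where "Q J \<longleftrightarrow> idl D J \<and> ext_ideal J \<inter> S = {}" for J
  have "\<exists>M. Q M \<and> I \<subseteq> M \<and> (\<forall>J. Q J \<and> M \<subseteq> J \<longrightarrow> J = M)"
  proof (rule zorn_above)
    show "Q I" using I IS unfolding Q_def by auto
    fix C assume C: "C \<noteq> {}" "subset.chain {J. Q J \<and> I \<subseteq> J} C"
    have CQ: "\<And>J. J \<in> C \<Longrightarrow> Q J" using C(2) unfolding subset_chain_def by auto
    have "idl D (\<Union>C)" by (rule chain_idl[OF C]) (use CQ in \<open>auto simp: Q_def\<close>)
    moreover have "ext_ideal (\<Union>C) \<inter> S = {}"
    proof (rule ccontr)
      assume "ext_ideal (\<Union>C) \<inter> S \<noteq> {}"
      then obtain f where f: "f \<in> ext_ideal (\<Union>C)" "f \<in> S" by auto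
      have z: "\<And>J. J \<in> C \<Longrightarrow> 0 \<in> J" using CQ unfolding Q_def idl_def is_submodule_def by auto
      obtain J where "J \<in> C" "f \<in> ext_ideal J" using chain_poly_sub[OF C f(1) z] by blast
      thus False using CQ f(2) unfolding Q_def by auto
    qed
    ultimately show "Q (\<Union>C)" unfolding Q_def by auto
  qed
  then obtain M where M12: "Q M" "I \<subseteq> M" and M3: "\<forall>J. Q J \<and> M \<subseteq> J \<longrightarrow> J = M" by blast
  have M: "Q M" "I \<subseteq> M" "\<And>J. Q J \<Longrightarrow> M \<subseteq> J \<Longrightarrow> J = M" using M12 M3 by auto
  have Mi: "idl D M" "ext_ideal M \<inter> S = {}" using M(1) unfolding Q_def by auto
  note dB = dom_basic[OF D]
  have "1 \<in> ext_ideal D" using DX_one[OF D] DX_ext by auto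
  hence MD: "M \<noteq> D" using Mi S_props[OF D S] by auto
  have prime: "x \<in> M \<or> y \<in> M" if xy: "x \<in> D" "y \<in> D" "x * y \<in> M" for x y
  proof (rule ccontr)
    assume nxy: "\<not> (x \<in> M \<or> y \<in> M)"
    have notQ: "\<not> Q (addI D M a)" if a: "a \<in> D" "a \<notin> M" for a
    proof
      assume "Q (addI D M a)"
      hence "addI D M a = M" using M(3) addI_idl[OF D Mi(1) a(1)] by auto
      thus False using addI_idl(3)[OF D Mi(1) a(1)] a by auto
    qed
    obtain f where f: "f \<in> ext_ideal (addI D M x)" "f \<in> S"
      using notQ[OF xy(1)] nxy addI_idl[OF D Mi(1) xy(1)] unfolding Q_def by blast
    obtain g where g: "g \<in> ext_ideal (addI D M y)" "g \<in> S"
      using notQ[OF xy(2)] nxy addI_idl[OF D Mi(1) xy(2)] unfolding Q_def by blast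
    have "coeff (f * g) n \<in> M" for n
      unfolding coeff_mult
    proof (rule submod_sum)
      show "is_submodule D M" using Mi unfolding idl_def by auto
      fix i show "coeff f i * coeff g (n - i) \<in> M"
        using addI_prod[OF D Mi(1) xy] f g unfolding ext_ideal_def by auto
    qed
    hence "f * g \<in> ext_ideal M" unfolding ext_ideal_def by auto
    moreover have "f * g \<in> S" using S_props(4)[OF D S f(2) g(2)] .
    ultimately show False using Mi by auto
  qed
  have MSpec: "M \<in> Spec D"
    using Mi MD prime unfolding Spec_def idl_def is_submodule_def by auto
  have "M \<in> Nabla D S"
    unfolding Nabla_def Delta_def
  proof (intro CollectI conjI ballI impI)
    show "M \<in> Spec D" "ext_ideal M \<inter> S = {}" using MSpec Mi by auto
    fix Q' assume "Q' \<in> {P \<in> Spec D. ext_ideal P \<inter> S = {}}" "M \<subseteq> Q'"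
    thus "Q' = M" using M(3)[of Q'] Spec_idl[OF D] unfolding Q_def by auto
  qed
  thus ?thesis using M(2) by auto
qed

lemma part_f2:
  "S \<subseteq> Nstar D (v_op D) \<longleftrightarrow> D = \<Inter>{localize_at D P | P. P \<in> Nabla D S}"
proof
  assume h: "D = \<Inter>{localize_at D P | P. P \<in> Nabla D S}"
  have "circ_op D S D = D"
  proof
    show "D \<subseteq> circ_op D S D" by (rule circ_extensive[OF D S submod_D[OF D]])
    show "circ_op D S D \<subseteq> D"
    proof
      fix x assume "x \<in> circ_op D S D"
      then obtain g where g: "g \<in> S" "smult x g \<in> ext_ideal D"
        using circ_char[OF D S submod_D[OF D]] by auto
      have "x \<in> localize_at D P" if P: "P \<in> Nabla D S" for P
      proof -
        have P': "P \<in> Spec D" "ext_ideal P \<inter> S = {}" using P unfolding Nabla_def Delta_def by auto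
        then obtain i where i: "coeff g i \<notin> P" using g unfolding ext_ideal_def by auto
        have sD: "coeff g i \<in> D" using g S_props[OF D S] unfolding DX_def by auto
        have "0 \<in> P" using P' unfolding Spec_def by auto
        hence s0: "coeff g i \<noteq> 0" using i by auto
        have "coeff (smult x g) i \<in> D" using g unfolding ext_ideal_def by blast
        hence aD: "x * coeff g i \<in> D" by simp
        have "x = (x * coeff g i) / coeff g i" using s0 by simp
        thus ?thesis unfolding localize_at_def using aD sD i by blast
      qed
      hence "x \<in> \<Inter>{localize_at D P | P. P \<in> Nabla D S}" by auto
      thus "x \<in> D" using h by simp
    qed
  qed
  thus "S \<subseteq> Nstar D (v_op D)" using part_f1[OF D S] by simp
next
  assume h: "S \<subseteq> Nstar D (v_op D)"
  hence circD: "circ_op D S D = D" using part_f1[OF D S] by simp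
  note dB = dom_basic[OF D]
  show "D = \<Inter>{localize_at D P | P. P \<in> Nabla D S}"
  proof
    show "D \<subseteq> \<Inter>{localize_at D P | P. P \<in> Nabla D S}"
    proof (clarsimp)
      fix d P assume d: "d \<in> D" and P: "P \<in> Nabla D S"
      have "P \<in> Spec D" using P unfolding Nabla_def Delta_def by auto
      hence "1 \<in> D - P" using one_notin_Spec[OF D] dB by auto
      moreover have "d = d / 1" by simp
      ultimately show "d \<in> localize_at D P" unfolding localize_at_def using d by blast
    qed
  next
    show "\<Inter>{localize_at D P | P. P \<in> Nabla D S} \<subseteq> D"
    proof
      fix x assume x: "x \<in> \<Inter>{localize_at D P | P. P \<in> Nabla D S}"
      define I where "I = {d \<in> D. d * x \<in> D}"
      have I: "idl D I" unfolding idl_def is_submodule_def I_def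
        using dB by (auto simp: distrib_right mult.assoc)
      show "x \<in> D"
      proof (cases "ext_ideal I \<inter> S = {}")
        case False
        then obtain g where g: "g \<in> S" "g \<in> ext_ideal I" by auto
        have "smult x g \<in> ext_ideal D" using g unfolding ext_ideal_def I_def by (auto simp: mult.commute)
        hence "x \<in> circ_op D S D" using circ_char[OF D S submod_D[OF D]] g by auto
        thus ?thesis using circD by simp
      next
        case True
        obtain M where M: "M \<in> Nabla D S" "I \<subseteq> M" using Delta_zorn[OF I True] by auto
        have MS: "M \<in> Spec D" using M unfolding Nabla_def Delta_def by auto
        have "x \<in> localize_at D M" using x M by auto
        then obtain a s where as: "a \<in> D" "s \<in> D" "s \<notin> M" "x = a / s"
          unfolding localize_at_def by auto
        have "0 \<in> M" using MS unfolding Spec_def by auto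
        hence "s \<noteq> 0" using as by auto
        hence "s * x = a" using as by simp
        hence "s \<in> I" unfolding I_def using as by auto
        thus ?thesis using M as by auto
      qed
    qed
  qed
qed

end

lemma loc_eq_sat:
  assumes D: "is_domain_with_qf D"
    and T1: "0 \<notin> T1" and sat1: "\<And>f g. f \<in> DX D \<Longrightarrow> g \<in> DX D \<Longrightarrow> f * g \<in> T1 \<Longrightarrow> g \<in> T1"
    and T2: "T2 \<subseteq> DX D" "0 \<notin> T2"
    and eq: "locX D T2 = locX D T1"
  shows "T2 \<subseteq> T1"
proof
  fix g assume g: "g \<in> T2"
  have "Fract 1 g \<in> locX D T2" unfolding locX_def using g DX_one[OF D] by blast
  hence "Fract 1 g \<in> locX D T1" using eq by simp
  then obtain f h where fh: "f \<in> DX D" "h \<in> T1" "Fract 1 g = Fract f h" unfolding locX_def by blast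
  have "g \<noteq> 0" "h \<noteq> 0" using g fh T1 T2 by auto
  hence "1 * h = f * g" using fh(3) by (simp add: eq_fract)
  hence "f * g \<in> T1" using fh by simp
  thus "g \<in> T1" using sat1[OF fh(1)] g T2 by auto
qed

lemma ext_sat_saturated:
  assumes D: "is_domain_with_qf D" and S: "is_ext_saturated D S"
    and f: "f \<in> DX D" and g: "g \<in> DX D" and fg: "f * g \<in> S"
  shows "g \<in> S"
proof -
  have "g \<notin> ext_ideal P" if P: "P \<in> Spec D" "ext_ideal P \<inter> S = {}" for P
  proof
    assume "g \<in> ext_ideal P"
    hence "f * g \<in> ext_ideal P" using ext_mult(2)[OF Spec_submod[OF P(1)] _ f] by blast
    thus False using P fg by auto
  qed
  hence "g \<in> ext_sat D S" unfolding ext_sat_def using g by auto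
  thus ?thesis using S unfolding is_ext_saturated_def by simp
qed

lemma Nv_saturated:
  assumes D: "is_domain_with_qf D"
    and f: "f \<in> DX D" and g: "g \<in> DX D" and fg: "f * g \<in> Nstar D (v_op D)"
  shows "g \<in> Nstar D (v_op D)"
proof -
  have fg': "f * g \<noteq> 0" "colon D (content_D D (f * g)) \<subseteq> D" using fg Nstar_v_iff[OF D] by auto
  have "g \<noteq> 0" using fg' by auto
  moreover have "colon D (content_D D g) \<subseteq> D"
  proof
    fix x assume "x \<in> colon D (content_D D g)"
    hence "smult x g \<in> ext_ideal D" using colon_content[OF D] by auto
    hence "f * smult x g \<in> ext_ideal D" using ext_mult(2)[OF submod_D[OF D] _ f] by blast
    hence "smult x (f * g) \<in> ext_ideal D" by simp
    hence "x \<in> colon D (content_D D (f * g))" using colon_content[OF D] by auto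
    thus "x \<in> D" using fg' by auto
  qed
  ultimately show ?thesis using Nstar_v_iff[OF D] g by auto
qed

lemma part_h:
  assumes D: "is_domain_with_qf D" and S: "mult_subset D S" and sat: "is_ext_saturated D S"
  shows "Na D (v_op D) = locX D S \<longleftrightarrow> S = Nstar D (v_op D)"
proof
  assume eq: "Na D (v_op D) = locX D S"
  have N: "Nstar D (v_op D) \<subseteq> DX D" "0 \<notin> Nstar D (v_op D)" unfolding Nstar_def by auto
  have "S \<subseteq> Nstar D (v_op D)"
    by (rule loc_eq_sat[OF D N(2) Nv_saturated[OF D]]) (use S_props[OF D S] eq in \<open>auto simp: Na_def\<close>)
  moreover have "Nstar D (v_op D) \<subseteq> S"
    by (rule loc_eq_sat[OF D _ ext_sat_saturated[OF D sat] N]) (use S_props[OF D S] eq in \<open>auto simp: Na_def\<close>)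
  ultimately show "S = Nstar D (v_op D)" by auto
qed (simp add: Na_def)


context
  fixes D :: "'a::field set" and st :: "'a set \<Rightarrow> 'a set"
  assumes D: "is_domain_with_qf D" and ss: "semistar D st" and stab: "semistar_stable D st"
    and ft: "semistar_finite_type D st"
begin

lemma ssd: "(\<forall>E\<in>Fbar D. st E \<in> Fbar D) \<and>
     (\<forall>x. \<forall>E\<in>Fbar D. x \<noteq> 0 \<longrightarrow> st ((\<lambda>e. x * e) ` E) = (\<lambda>e. x * e) ` st E) \<and>
     (\<forall>E\<in>Fbar D. \<forall>F\<in>Fbar D. E \<subseteq> F \<longrightarrow> st E \<subseteq> st F) \<and>
     (\<forall>E\<in>Fbar D. E \<subseteq> st E) \<and>
     (\<forall>E\<in>Fbar D. st (st E) = st E)"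
  using ss unfolding semistar_def .
lemma st_Fbar: "E \<in> Fbar D \<Longrightarrow> st E \<in> Fbar D"
  using conjunct1[OF ssd] by blast
lemma st_hom: "E \<in> Fbar D \<Longrightarrow> x \<noteq> 0 \<Longrightarrow> st ((\<lambda>e. x * e) ` E) = (\<lambda>e. x * e) ` st E"
  using conjunct1[OF conjunct2[OF ssd]] by blast
lemma st_mono: "E \<in> Fbar D \<Longrightarrow> F \<in> Fbar D \<Longrightarrow> E \<subseteq> F \<Longrightarrow> st E \<subseteq> st F"
  using conjunct1[OF conjunct2[OF conjunct2[OF ssd]]] by blast
lemma st_ext: "E \<in> Fbar D \<Longrightarrow> E \<subseteq> st E"
  using conjunct1[OF conjunct2[OF conjunct2[OF conjunct2[OF ssd]]]] by blast
lemma st_idem: "E \<in> Fbar D \<Longrightarrow> st (st E) = st E"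
  using conjunct2[OF conjunct2[OF conjunct2[OF conjunct2[OF ssd]]]] by blast
lemma st_submod: "E \<in> Fbar D \<Longrightarrow> is_submodule D (st E)"
  using st_Fbar Fbar_submod by blast
lemma st_stab: "E \<in> Fbar D \<Longrightarrow> F \<in> Fbar D \<Longrightarrow> st (E \<inter> F) = st E \<inter> st F"
  using stab unfolding semistar_stable_def by blast
lemma st_ft: "E \<in> Fbar D \<Longrightarrow> st E = \<Union>{st F | F. F \<in> fg_frac_ideals D \<and> F \<subseteq> E}"
  using ft unfolding semistar_finite_type_def by blast

lemma one_st_D: "1 \<in> st D"
  using st_ext[OF D_Fbar[OF D]] dom_basic(2)[OF D] by auto

lemma one_in_iff:
  assumes I: "I \<in> Fbar D" "I \<subseteq> D"
  shows "st I = st D \<longleftrightarrow> 1 \<in> st I"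
proof
  assume "st I = st D" thus "1 \<in> st I" using one_st_D by simp
next
  assume one: "1 \<in> st I"
  have "D \<subseteq> st I"
  proof
    fix d assume "d \<in> D"
    hence "d * 1 \<in> st I" using one st_submod[OF I(1)] unfolding is_submodule_def by blast
    thus "d \<in> st I" by simp
  qed
  hence "st D \<subseteq> st (st I)" using st_mono[OF D_Fbar[OF D] st_Fbar[OF I(1)]] by blast
  moreover have "st I \<subseteq> st D" using st_mono[OF I(1) D_Fbar[OF D] I(2)] .
  ultimately show "st I = st D" using st_idem[OF I(1)] by auto
qed

lemma Fbar_of_sup: "is_submodule D J \<Longrightarrow> I \<in> Fbar D \<Longrightarrow> I \<subseteq> J \<Longrightarrow> J \<in> Fbar D"
  unfolding Fbar_def is_submodule_def by auto

lemma star_zorn: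
  assumes I: "I \<in> Fbar D" "idl D I" and nI: "1 \<notin> st I"
  shows "\<exists>M. M \<in> Spec D \<and> I \<subseteq> M \<and> 1 \<notin> st M"
proof -
  define Q where "Q J \<longleftrightarrow> idl D J \<and> J \<in> Fbar D \<and> 1 \<notin> st J" for J
  have "\<exists>M. Q M \<and> I \<subseteq> M \<and> (\<forall>J. Q J \<and> M \<subseteq> J \<longrightarrow> J = M)"
  proof (rule zorn_above)
    show "Q I" using I nI unfolding Q_def by auto
    fix C assume C: "C \<noteq> {}" "subset.chain {J. Q J \<and> I \<subseteq> J} C"
    have CQ: "\<And>J. J \<in> C \<Longrightarrow> Q J \<and> I \<subseteq> J" using C(2) unfolding subset_chain_def by auto
    have U: "idl D (\<Union>C)" by (rule chain_idl[OF C]) (use CQ in \<open>auto simp: Q_def\<close>)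
    have "I \<subseteq> \<Union>C" using C(1) CQ by blast
    hence UF: "\<Union>C \<in> Fbar D" using Fbar_of_sup[OF _ I(1)] U unfolding idl_def by blast
    have "1 \<notin> st (\<Union>C)"
    proof
      assume "1 \<in> st (\<Union>C)"
      then obtain F where F: "F \<in> fg_frac_ideals D" "F \<subseteq> \<Union>C" "1 \<in> st F"
        using st_ft[OF UF] by blast
      then obtain A where A: "finite A" "F = gen_mod D A" unfolding fg_frac_ideals_def by blast
      have "A \<subseteq> \<Union>C" using F(2) A gen_mod_gen[OF D] by blast
      then obtain J where J: "J \<in> C" "A \<subseteq> J" using chain_finite_sub[OF C A(1)] by blast
      have Jq: "Q J" using CQ J by auto
      hence "F \<subseteq> J" using A J gen_mod_least[of D J A] unfolding Q_def idl_def by auto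
      hence "st F \<subseteq> st J" using st_mono fg_Fbar[OF D] F(1) Jq unfolding Q_def by blast
      thus False using F(3) Jq unfolding Q_def by auto
    qed
    thus "Q (\<Union>C)" using U UF unfolding Q_def by auto
  qed
  then obtain M where M12: "Q M" "I \<subseteq> M" and M3: "\<forall>J. Q J \<and> M \<subseteq> J \<longrightarrow> J = M" by blast
  have Mi: "idl D M" "M \<in> Fbar D" "1 \<notin> st M" using M12 unfolding Q_def by auto
  have MD: "M \<noteq> D" using Mi one_st_D by auto
  have Ms: "is_submodule D M" using Mi unfolding idl_def by auto
  have prime: "x \<in> M \<or> y \<in> M" if xy: "x \<in> D" "y \<in> D" "x * y \<in> M" for x y
  proof (rule ccontr)
    assume nxy: "\<not> (x \<in> M \<or> y \<in> M)"
    have oneJ: "1 \<in> st (addI D M a) \<and> addI D M a \<in> Fbar D" if a: "a \<in> D" "a \<notin> M" for a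
    proof -
      have JF: "addI D M a \<in> Fbar D"
        using Fbar_of_sup[OF _ Mi(2)] addI_idl[OF D Mi(1) a(1)] unfolding idl_def by blast
      have "1 \<in> st (addI D M a)"
      proof (rule ccontr)
        assume "1 \<notin> st (addI D M a)"
        hence "Q (addI D M a)" using JF addI_idl[OF D Mi(1) a(1)] unfolding Q_def by auto
        hence "addI D M a = M" using M3 addI_idl[OF D Mi(1) a(1)] by auto
        thus False using addI_idl(3)[OF D Mi(1) a(1)] a by auto
      qed
      thus ?thesis using JF by auto
    qed
    have x0: "x \<noteq> 0" using nxy Ms unfolding is_submodule_def by auto
    have Jy: "1 \<in> st (addI D M y)" "addI D M y \<in> Fbar D" using oneJ[of y] xy nxy by auto
    have Jx: "1 \<in> st (addI D M x)" "addI D M x \<in> Fbar D" using oneJ[of x] xy nxy by auto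
    have "(\<lambda>e. x * e) ` addI D M y \<subseteq> M"
      using addI_prod[OF D Mi(1) xy] addI_idl(3)[OF D Mi(1) xy(1)] by auto
    hence "st ((\<lambda>e. x * e) ` addI D M y) \<subseteq> st M"
      using st_mono[OF Fbar_scale[OF Jy(2) x0] Mi(2)] by blast
    hence "x * 1 \<in> st M" using st_hom[OF Jy(2) x0] Jy(1) by blast
    hence xM: "x \<in> st M" by simp
    have "addI D M x \<subseteq> st M"
    proof
      fix z assume "z \<in> addI D M x"
      then obtain m d where md: "z = m + x * d" "m \<in> M" "d \<in> D" unfolding addI_def by blast
      have "m \<in> st M" using md st_ext[OF Mi(2)] by auto
      moreover have "d * x \<in> st M" using xM md st_submod[OF Mi(2)] unfolding is_submodule_def by blast
      ultimately show "z \<in> st M" using md st_submod[OF Mi(2)] unfolding is_submodule_def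
        by (simp add: mult.commute)
    qed
    hence "st (addI D M x) \<subseteq> st M"
      using st_mono[OF Jx(2) st_Fbar[OF Mi(2)]] st_idem[OF Mi(2)] by auto
    thus False using Jx(1) Mi(3) by auto
  qed
  have "M \<in> Spec D" using Mi MD prime unfolding Spec_def idl_def is_submodule_def by auto
  thus ?thesis using M12 Mi by auto
qed

definition "TT = Nstar D st"

lemma TT_eq: "TT = Nstar D st" unfolding TT_def by (rule refl)

lemma content_idl: "g \<in> DX D \<Longrightarrow> idl D (content_D D g)"
  unfolding idl_def using content_submod[OF D] content_sub_D[OF D] by auto

lemma TT_bad_prime:
  assumes g: "g \<in> DX D" "g \<noteq> 0" and ng: "st (content_D D g) \<noteq> st D"
  shows "\<exists>M. M \<in> Spec D \<and> g \<in> ext_ideal M \<and> 1 \<notin> st M"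
proof -
  have cF: "content_D D g \<in> Fbar D" using content_Fbar[OF D g(2)] .
  have "1 \<notin> st (content_D D g)" using ng one_in_iff[OF cF content_sub_D[OF D g(1)]] by auto
  then obtain M where M: "M \<in> Spec D" "content_D D g \<subseteq> M" "1 \<notin> st M"
    using star_zorn[OF cF content_idl[OF g(1)]] by auto
  thus ?thesis using content_sub_iff[OF D Spec_submod[OF M(1)]] by auto
qed

lemma TT_prime_disj:
  assumes M: "M \<in> Spec D" "1 \<notin> st M" and h: "h \<in> TT"
  shows "h \<notin> ext_ideal M"
proof
  assume "h \<in> ext_ideal M"
  hence "content_D D h \<subseteq> M" using content_sub_iff[OF D Spec_submod[OF M(1)]] by auto
  moreover have hh: "h \<in> DX D" "h \<noteq> 0" "st (content_D D h) = st D" using h unfolding TT_def Nstar_def by auto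
  moreover have "M \<in> Fbar D"
    by (rule Fbar_of_sup[OF Spec_submod[OF M(1)] content_Fbar[OF D hh(2)] calculation(1)])
  ultimately have "st (content_D D h) \<subseteq> st M" using st_mono[OF content_Fbar[OF D hh(2)]] by blast
  hence "st D \<subseteq> st M" using hh(3) by simp
  thus False using one_st_D M(2) by auto
qed

lemma TT_mult: "mult_subset D TT"
proof -
  have c1: "content_D D 1 \<in> Fbar D" "content_D D 1 \<subseteq> D" "1 \<in> content_D D 1"
    using content_Fbar[OF D, of 1] content_sub_D[OF D DX_one[OF D]] coeff_in_content[OF D, of 1 0] by auto
  have "1 \<in> TT" unfolding TT_def Nstar_def
    using DX_one[OF D] one_in_iff[OF c1(1,2)] st_ext[OF c1(1)] c1(3) by auto
  moreover have "f * g \<in> TT" if f: "f \<in> TT" and g: "g \<in> TT" for f g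
  proof (rule ccontr)
    assume nfg: "f * g \<notin> TT"
    have ff: "f \<in> DX D" "f \<noteq> 0" and gg: "g \<in> DX D" "g \<noteq> 0" using f g unfolding TT_def Nstar_def by auto
    have fgD: "f * g \<in> DX D" "f * g \<noteq> 0" using DX_mult[OF D ff(1) gg(1)] ff gg by auto
    hence "st (content_D D (f * g)) \<noteq> st D" using nfg unfolding TT_def Nstar_def by auto
    then obtain M where M: "M \<in> Spec D" "f * g \<in> ext_ideal M" "1 \<notin> st M"
      using TT_bad_prime[OF fgD] by auto
    have "f \<notin> ext_ideal M" "g \<notin> ext_ideal M" using TT_prime_disj[OF M(1,3)] f g by auto
    thus False using gauss_prime[OF D M(1) ff(1) gg(1)] M(2) by auto
  qed
  ultimately show ?thesis unfolding mult_subset_def TT_def Nstar_def by auto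
qed

lemma zero_Spec: "{0} \<in> Spec D"
  using dom_basic[OF D] unfolding Spec_def by auto

lemma TT_sat: "is_ext_saturated D TT"
  unfolding is_ext_saturated_def
proof
  show "TT \<subseteq> ext_sat D TT" unfolding ext_sat_def using TT_mult unfolding mult_subset_def by auto
  show "ext_sat D TT \<subseteq> TT"
  proof
    fix g assume g: "g \<in> ext_sat D TT"
    hence gD: "g \<in> DX D" unfolding ext_sat_def by auto
    have "0 \<notin> TT" using TT_mult unfolding mult_subset_def by auto
    hence "ext_ideal {0} \<inter> TT = {}" using ext_ideal_zero by (metis disjoint_iff singletonD)
    hence "g \<notin> ext_ideal {0}" using g zero_Spec unfolding ext_sat_def by auto
    hence g0: "g \<noteq> 0" using ext_ideal_zero by auto
    show "g \<in> TT"
    proof (rule ccontr)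
      assume "g \<notin> TT"
      hence "st (content_D D g) \<noteq> st D" using gD g0 unfolding TT_def Nstar_def by auto
      then obtain M where M: "M \<in> Spec D" "g \<in> ext_ideal M" "1 \<notin> st M"
        using TT_bad_prime[OF gD g0] by auto
      have "ext_ideal M \<inter> TT = {}" using TT_prime_disj[OF M(1,3)] by auto
      thus False using g M unfolding ext_sat_def by auto
    qed
  qed
qed

end

context
  fixes D :: "'a::field set" and st :: "'a set \<Rightarrow> 'a set"
  assumes D: "is_domain_with_qf D" and ss: "semistar D st" and stab: "semistar_stable D st"
    and ft: "semistar_finite_type D st"
begin

lemma circ_TT:
  assumes E: "E \<in> Fbar D"
  shows "circ_op D (TT D st) E = st E"
proof
  have T: "mult_subset D (TT D st)" by (rule TT_mult[OF D ss stab ft])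
  have Es: "is_submodule D E" using Fbar_submod[OF E] .
  note stS = st_submod[OF D ss stab ft E]
  show "circ_op D (TT D st) E \<subseteq> st E"
  proof
    fix c assume "c \<in> circ_op D (TT D st) E"
    then obtain g where g: "g \<in> TT D st" "smult c g \<in> ext_ideal E" using circ_char[OF D T Es] by auto
    show "c \<in> st E"
    proof (cases "c = 0")
      case True thus ?thesis using stS unfolding is_submodule_def by auto
    next
      case False
      have gg: "g \<in> DX D" "g \<noteq> 0" "st (content_D D g) = st D" using g unfolding TT_eq[OF D ss stab ft] Nstar_def by auto
      have cF: "content_D D g \<in> Fbar D" using content_Fbar[OF D gg(2)] .
      have sub: "(\<lambda>e. c * e) ` content_D D g \<subseteq> E" using content_scale_sub_iff[OF D Es] g by auto
      have "st ((\<lambda>e. c * e) ` content_D D g) \<subseteq> st E"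
        using st_mono[OF D ss stab ft Fbar_scale[OF cF False] E sub] .
      moreover have "st ((\<lambda>e. c * e) ` content_D D g) = (\<lambda>e. c * e) ` st D"
        using st_hom[OF D ss stab ft cF False] gg(3) by simp
      moreover have "c * 1 \<in> (\<lambda>e. c * e) ` st D" using one_st_D[OF D ss stab ft] by blast
      ultimately show ?thesis by auto
    qed
  qed
  show "st E \<subseteq> circ_op D (TT D st) E"
  proof
    fix c assume c: "c \<in> st E"
    show "c \<in> circ_op D (TT D st) E"
    proof (cases "c = 0")
      case True thus ?thesis using circ_submod[OF D T Es] unfolding is_submodule_def by auto
    next
      case False
      define E' where "E' = (\<lambda>e. inverse c * e) ` E"
      have ic: "inverse c \<noteq> 0" using False by simp
      have E'F: "E' \<in> Fbar D" unfolding E'_def by (rule Fbar_scale[OF E ic])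
      define I where "I = E' \<inter> D"
      have IF: "I \<in> Fbar D" unfolding I_def by (rule Fbar_Int[OF D E'F D_Fbar[OF D]])
      have "st I = st E' \<inter> st D" unfolding I_def by (rule st_stab[OF D ss stab ft E'F D_Fbar[OF D]])
      moreover have "st E' = (\<lambda>e. inverse c * e) ` st E" unfolding E'_def by (rule st_hom[OF D ss stab ft E ic])
      moreover have "1 = inverse c * c" using False by simp
      ultimately have "1 \<in> st I" using c one_st_D[OF D ss stab ft] by auto
      then obtain G where G: "G \<in> fg_frac_ideals D" "G \<subseteq> I" "1 \<in> st G"
        using st_ft[OF D ss stab ft IF] by blast
      then obtain A where A: "finite A" "G = gen_mod D A" "G \<noteq> {0}" unfolding fg_frac_ideals_def by blast
      obtain xs where xs: "set xs = A" using finite_list[OF A(1)] by blast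
      define g where "g = Poly xs"
      have Gs: "is_submodule D G" using gen_mod_submod[OF D] A by simp
      have AG: "A \<subseteq> G" using A gen_mod_gen[OF D] by blast
      have cg: "coeff g i \<in> A \<union> {0}" for i
        unfolding g_def coeff_Poly_eq nth_default_def using xs by auto
      have cgG: "coeff g i \<in> G" for i
      proof -
        have "coeff g i \<in> A \<or> coeff g i = 0" using cg[of i] by auto
        thus ?thesis using AG Gs unfolding is_submodule_def by auto
      qed
      hence "g \<in> ext_ideal G" unfolding ext_ideal_def by auto
      hence c1: "content_D D g \<subseteq> G" using content_sub_iff[OF D Gs] by auto
      have "A \<subseteq> content_D D g"
      proof
        fix a assume "a \<in> A"
        then obtain k where k: "k < length xs" "xs ! k = a" using xs by (auto simp: in_set_conv_nth)
        hence "coeff g k = a" unfolding g_def coeff_Poly_eq by (simp add: nth_default_nth)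
        thus "a \<in> content_D D g" using coeff_in_content[OF D, of g k] by simp
      qed
      hence "G \<subseteq> content_D D g" unfolding A(2) by (rule gen_mod_least[OF content_submod[OF D]])
      hence cG: "content_D D g = G" using c1 by auto
      have ID: "I \<subseteq> D" unfolding I_def by auto
      have gD: "g \<in> DX D" unfolding DX_def using cgG G(2) ID by auto
      have g0: "g \<noteq> 0"
      proof
        assume "g = 0"
        hence "G \<subseteq> {0}" using cgG cG content_sub_iff[OF D, of "{0}" g] unfolding is_submodule_def ext_ideal_def
          by auto
        thus False using A(3) Gs unfolding is_submodule_def by auto
      qed
      have GF: "G \<in> Fbar D" using fg_Fbar[OF D] G(1) by auto
      have "st (content_D D g) = st D" unfolding cG using one_in_iff[OF D ss stab ft GF] G(2,3) ID by auto
      hence gT: "g \<in> TT D st" unfolding TT_eq[OF D ss stab ft] Nstar_def using gD g0 by auto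
      have "smult c g \<in> ext_ideal E"
      proof (rule ext_idealI)
        fix i
        have "coeff g i \<in> E'" using cgG G(2) unfolding I_def by auto
        then obtain e where "e \<in> E" "coeff g i = inverse c * e" unfolding E'_def by auto
        thus "coeff (smult c g) i \<in> E" using False by (simp add: mult.assoc[symmetric])
      qed
      thus ?thesis using circ_char[OF D T Es] gT by auto
    qed
  qed
qed

end

lemma bij_part:
  assumes D: "is_domain_with_qf D"
  shows "bij_betw (\<lambda>T. restrict (circ_op D T) (Fbar D))
        {T. mult_subset D T \<and> is_ext_saturated D T}
        {st. semistar D st \<and> semistar_stable D st \<and> semistar_finite_type D st \<and>
             st \<in> extensional (Fbar D)}"
  unfolding bij_betw_def
proof (intro conjI)
  show "inj_on (\<lambda>T. restrict (circ_op D T) (Fbar D)) {T. mult_subset D T \<and> is_ext_saturated D T}"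
    by (rule circ_inj[OF D])
  show "(\<lambda>T. restrict (circ_op D T) (Fbar D)) ` {T. mult_subset D T \<and> is_ext_saturated D T} =
    {st. semistar D st \<and> semistar_stable D st \<and> semistar_finite_type D st \<and> st \<in> extensional (Fbar D)}"
  proof
    show "(\<lambda>T. restrict (circ_op D T) (Fbar D)) ` {T. mult_subset D T \<and> is_ext_saturated D T} \<subseteq>
      {st. semistar D st \<and> semistar_stable D st \<and> semistar_finite_type D st \<and> st \<in> extensional (Fbar D)}"
      using circ_semistar_all[OF D] by blast
  next
    show "{st. semistar D st \<and> semistar_stable D st \<and> semistar_finite_type D st \<and> st \<in> extensional (Fbar D)}
      \<subseteq> (\<lambda>T. restrict (circ_op D T) (Fbar D)) ` {T. mult_subset D T \<and> is_ext_saturated D T}"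
    proof
      fix st assume "st \<in> {st. semistar D st \<and> semistar_stable D st \<and> semistar_finite_type D st \<and> st \<in> extensional (Fbar D)}"
      hence st: "semistar D st" "semistar_stable D st" "semistar_finite_type D st" "st \<in> extensional (Fbar D)"
        by auto
      have "restrict (circ_op D (TT D st)) (Fbar D) = st"
      proof (rule extensionalityI[OF _ st(4)])
        show "restrict (circ_op D (TT D st)) (Fbar D) \<in> extensional (Fbar D)"
          by (rule restrict_extensional)
        fix E assume E: "E \<in> Fbar D"
        show "restrict (circ_op D (TT D st)) (Fbar D) E = st E"
          using E circ_TT[OF D st(1-3) E] by simp
      qed
      moreover have "TT D st \<in> {T. mult_subset D T \<and> is_ext_saturated D T}"
        using TT_mult[OF D st(1-3)] TT_sat[OF D st(1-3)] by auto
      ultimately show "st \<in> (\<lambda>T. restrict (circ_op D T) (Fbar D)) ` {T. mult_subset D T \<and> is_ext_saturated D T}"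
        by (rule rev_image_eqI[rotated, OF sym])
    qed
  qed
qed

lemma bij_restrict_pred:
  assumes "bij_betw f A B" and "\<And>x. x \<in> A \<Longrightarrow> P x \<longleftrightarrow> Q (f x)"
  shows "bij_betw f {x\<in>A. P x} {y\<in>B. Q y}"
  using assms unfolding bij_betw_def inj_on_def by auto

theorem theorem2p1:
  fixes D :: "'a::field set" and S :: "'a poly set"
  assumes D: "is_domain_with_qf D"
    and S: "mult_subset D S"
  shows
    "(circ_op D S D = D \<longleftrightarrow> S \<subseteq> Nstar D (v_op D)) \<and>
     (S \<subseteq> Nstar D (v_op D) \<longleftrightarrow> D = \<Inter>{localize_at D P | P. P \<in> Nabla D S})
    \<and>
     bij_betw (\<lambda>T. restrict (circ_op D T) (Fbar D))
        {T. mult_subset D T \<and> is_ext_saturated D T}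
        {st. semistar D st \<and> semistar_stable D st \<and> semistar_finite_type D st \<and>
             st \<in> extensional (Fbar D)} \<and>
     bij_betw (\<lambda>T. restrict (circ_op D T) (Fbar D))
        {T. mult_subset D T \<and> is_ext_saturated D T \<and> T \<subseteq> Nstar D (v_op D)}
        {st. semistar D st \<and> semistar_stable D st \<and> semistar_finite_type D st \<and>
             st \<in> extensional (Fbar D) \<and> st D = D} \<and>
     (is_ext_saturated D S \<longrightarrow> (Na D (v_op D) = locX D S \<longleftrightarrow> S = Nstar D (v_op D)))"
proof (intro conjI impI)
  show "circ_op D S D = D \<longleftrightarrow> S \<subseteq> Nstar D (v_op D)" by (rule part_f1[OF D S])
  show "S \<subseteq> Nstar D (v_op D) \<longleftrightarrow> D = \<Inter>{localize_at D P | P. P \<in> Nabla D S}"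
    by (rule part_f2[OF D S])
  show B: "bij_betw (\<lambda>T. restrict (circ_op D T) (Fbar D))
        {T. mult_subset D T \<and> is_ext_saturated D T}
        {st. semistar D st \<and> semistar_stable D st \<and> semistar_finite_type D st \<and>
             st \<in> extensional (Fbar D)}" by (rule bij_part[OF D])
  have "bij_betw (\<lambda>T. restrict (circ_op D T) (Fbar D))
        {T \<in> {T. mult_subset D T \<and> is_ext_saturated D T}. T \<subseteq> Nstar D (v_op D)}
        {st \<in> {st. semistar D st \<and> semistar_stable D st \<and> semistar_finite_type D st \<and>
             st \<in> extensional (Fbar D)}. st D = D}"
  proof (rule bij_restrict_pred[OF B])
    fix T assume "T \<in> {T. mult_subset D T \<and> is_ext_saturated D T}"
    hence T: "mult_subset D T" by auto
    show "T \<subseteq> Nstar D (v_op D) \<longleftrightarrow> restrict (circ_op D T) (Fbar D) D = D"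
      using part_f1[OF D T] D_Fbar[OF D] by simp
  qed
  moreover have "{T \<in> {T. mult_subset D T \<and> is_ext_saturated D T}. T \<subseteq> Nstar D (v_op D)} =
       {T. mult_subset D T \<and> is_ext_saturated D T \<and> T \<subseteq> Nstar D (v_op D)}" by auto
  moreover have "{st \<in> {st. semistar D st \<and> semistar_stable D st \<and> semistar_finite_type D st \<and>
             st \<in> extensional (Fbar D)}. st D = D} =
       {st. semistar D st \<and> semistar_stable D st \<and> semistar_finite_type D st \<and>
             st \<in> extensional (Fbar D) \<and> st D = D}" by auto
  ultimately show "bij_betw (\<lambda>T. restrict (circ_op D T) (Fbar D))
        {T. mult_subset D T \<and> is_ext_saturated D T \<and> T \<subseteq> Nstar D (v_op D)}
        {st. semistar D st \<and> semistar_stable D st \<and> semistar_finite_type D st \<and>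
             st \<in> extensional (Fbar D) \<and> st D = D}" by simp
next
  assume "is_ext_saturated D S"
  thus "Na D (v_op D) = locX D S \<longleftrightarrow> S = Nstar D (v_op D)" by (rule part_h[OF D S])
qed


end
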